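(* Assume $r\in\mathbb Z$, and let $\nu,p\in\mathbb Z_{\ge1}$ satisfy $r=1-2\nu+p$. Then $(\det\mathbf V_p)^{\nu}\mathbf 1$ is a singular vector of $M_r^{(1)}$, i.e. $v(m,n)(\det\mathbf V_p)^\nu\mathbf 1=0$ for all $m,n\in\mathbb Z$ with $m+n>0$. Consequently the $\mathcal L_r^{(1)}$-module $M_r^{(1)}$ is reducible.
   Context: Fix an integer $d\ge 2$ and $r\in\mathbb{C}$. Let $\hat{\mathfrak h}$ be the complex Lie algebra with basis $\{v^i(m)\mid 1\le i\le d,\ m\in\mathbb{Z}\}\cup\{\mathbf c\}$ and bracket $[v^i(m),v^j(n)]=\delta_{m+n,0}\delta_{i,j}\,m\,\mathbf c$, $[\mathbf c,\hat{\mathfrak h}]=0$. In $A=U(\hat{\mathfrak h})/\langle \mathbf c-1\rangle$ let $v^{ij}(m,n)$ be the image of $v^i(m)v^j(n)$; then $v^{ij}(m,n)=v^{ji}(n,m)$ unless $i=j$ and $m=-n$, and $v^{ii}(m,-m)=v^{ii}(-m,m)+m$. Let $\mathcal B=\{v^{ii}(m,n)\mid 1\le i\le d,\ m\le n\}\cup\{v^{ij}(m,n)\mid 1\le i<j\le d,\ m,n\in\mathbb Z\}$; then $\mathcal B\cup\{1\}$ is linearly independent, $\mathcal L:=\mathrm{span}_{\mathbb C}\mathcal B\oplus\mathbb C\subset A$ contains every $v^{ij}(m,n)$ and is closed under $[x,y]=xy-yx$. With $\pi_1,\pi_2$ the projections of $\mathcal L$ onto $\mathrm{span}\,\mathcal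 B$ and onto $\mathbb C$, $[x,y]_r=\pi_1([x,y])+r\pi_2([x,y])$ is a Lie bracket on $\mathcal L$; call this Lie algebra $\mathcal L_r$. Let $\mathcal B_+=\{v^{ij}(m,n)\in\mathcal B\mid m\ge 0\text{ or }n\ge 0\}$, $\mathcal L_r^+=\mathrm{span}\,\mathcal B_+\oplus\mathbb C$, and $M_r=U(\mathcal L_r)\otimes_{U(\mathcal L_r^+)}\mathbb C\mathbf 1$, where $\mathcal B_+$ acts by $0$ on $\mathbf 1$ and $s\in\mathbb C\subset\mathcal L_r$ acts by the scalar $s$. Let $\mathcal L_r^{(1)}$ be the Lie subalgebra of $\mathcal L_r$ generated by $\{v^{11}(m,n)\mid m,n\in\mathbb Z,\ m\le n\}$ and $M_r^{(1)}=U(\mathcal L_r^{(1)})\mathbf 1\subset M_r$. Write $v(m,n)=v^{11}(m,n)$. The elements $v(-s,-t)$ with $s,t>0$ pairwise commute in $U(\mathcal L_r)$, so for $p\ge1$ the determinant $\det\mathbf V_p=\sum_{\sigma\in\mathfrak S_p}\mathrm{sgn}(\sigma)\prod_{q=1}^p v(-q,-\sigma(q))\in U(\mathcal L_r^{(1)})$ of the $p\times p$ matrix $\mathbf V_p=(v(-s,-t))_{1\le s,t\le p}$ is well defined. *)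

theory Defs
  imports Complex_Main "HOL-Library.Multiset" "HOL-Library.Product_Lexorder"
    "HOL-Combinatorics.Permutations"
begin

text \<open>A key (i,j,m,n) stands for the element v^{ij}(m,n) of the Lie algebra L_r.
  Modules over L_r are given by the operators rho (i,j,m,n) on a complex vector space
  (scalar multiplication sc); constants s in C act as multiplication by s.\<close>

type_synonym key = "nat \<times> nat \<times> int \<times> int"

definition Keys :: "nat \<Rightarrow> key set" where
  "Keys d = {(i,j,m,n). 1 \<le> i \<and> i \<le> d \<and> 1 \<le> j \<and> j \<le> d}"

text \<open>Keys of the basis B (normal forms).\<close>
definition Bnorm :: "nat \<Rightarrow> key set" where
  "Bnorm d = {(i,j,m,n). (i,j,m,n) \<in> Keys d \<and> (i < j \<or> (i = j \<and> m \<le> n))}"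

definition Bplus :: "nat \<Rightarrow> key set" where
  "Bplus d = {(i,j,m,n). (i,j,m,n) \<in> Bnorm d \<and> (m \<ge> 0 \<or> n \<ge> 0)}"

definition Bminus :: "nat \<Rightarrow> key set" where
  "Bminus d = {(i,j,m,n). (i,j,m,n) \<in> Bnorm d \<and> m < 0 \<and> n < 0}"

text \<open>Constant part (projection pi_2) of v^{ab}(x,y) written in the basis B u {1}:
  v^{aa}(x,-x) = v^{aa}(-x,x) + x for x > 0.\<close>
definition cst :: "key \<Rightarrow> int" where
  "cst k = (case k of (a,b,x,y) \<Rightarrow> if a = b \<and> x + y = 0 \<and> x > 0 then x else 0)"

text \<open>Action of pi_1(v^{ab}(x,y)) + r pi_2(v^{ab}(x,y)), i.e. of the element v^{ab}(x,y)
  with its constant part rescaled by r, as happens in the bracket [_,_]_r.\<close>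
definition rho_r :: "complex \<Rightarrow> (complex \<Rightarrow> 'v \<Rightarrow> 'v) \<Rightarrow> (key \<Rightarrow> 'v \<Rightarrow> 'v) \<Rightarrow> key \<Rightarrow> 'v \<Rightarrow> 'v::ab_group_add" where
  "rho_r r sc \<rho> k x = \<rho> k x + sc ((r - 1) * of_int (cst k)) x"

definition dlt :: "bool \<Rightarrow> int \<Rightarrow> complex" where
  "dlt b c = (if b then of_int c else 0)"

text \<open>rho is a representation of L_r (with constants acting as scalars):
  linearity, the identities v^{ij}(m,n) = v^{ji}(n,m) (+ m if i = j, m = -n) in L,
  and [v^{ij}(m,n), v^{kl}(p,q)]_r computed from the Heisenberg relations.\<close>
definition Lr_module :: "nat \<Rightarrow> complex \<Rightarrow> (complex \<Rightarrow> 'v \<Rightarrow> 'v) \<Rightarrow> (key \<Rightarrow> 'v \<Rightarrow> 'v::ab_group_add) \<Rightarrow> bool" where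
  "Lr_module d r sc \<rho> \<longleftrightarrow>
     vector_space sc \<and>
     (\<forall>k\<in>Keys d. Vector_Spaces.linear sc sc (\<rho> k)) \<and>
     (\<forall>i j m n x. (i,j,m,n) \<in> Keys d \<longrightarrow>
        \<rho> (i,j,m,n) x = \<rho> (j,i,n,m) x + sc (if i = j \<and> m + n = 0 then of_int m else 0) x) \<and>
     (\<forall>i j m n k l p q x. (i,j,m,n) \<in> Keys d \<longrightarrow> (k,l,p,q) \<in> Keys d \<longrightarrow>
        \<rho> (i,j,m,n) (\<rho> (k,l,p,q) x) - \<rho> (k,l,p,q) (\<rho> (i,j,m,n) x) =
          sc (dlt (j = k \<and> n + p = 0) n) (rho_r r sc \<rho> (i,l,m,q) x)
        + sc (dlt (j = l \<and> n + q = 0) n) (rho_r r sc \<rho> (i,k,m,p) x)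
        + sc (dlt (i = k \<and> m + p = 0) m) (rho_r r sc \<rho> (l,j,q,n) x)
        + sc (dlt (i = l \<and> m + q = 0) m) (rho_r r sc \<rho> (k,j,p,n) x))"

text \<open>Apply the product of the operators of a list of keys (first element leftmost).\<close>
definition opw :: "(key \<Rightarrow> 'v \<Rightarrow> 'v) \<Rightarrow> key list \<Rightarrow> 'v \<Rightarrow> 'v" where
  "opw \<rho> ks x = foldr \<rho> ks x"

text \<open>(V, rho, w) is (isomorphic to) the induced module
  M_r = U(L_r) (x)_{U(L_r^+)} C 1 with 1 = w: w is annihilated by B_+, w generates V,
  and the PBW monomials in B_- applied to w are linearly independent
  (M_r is free of rank one over U(span B_-)).\<close>
definition Mr_model :: "nat \<Rightarrow> complex \<Rightarrow> (complex \<Rightarrow> 'v \<Rightarrow> 'v) \<Rightarrow> (key \<Rightarrow> 'v \<Rightarrow> 'v::ab_group_add) \<Rightarrow> 'v \<Rightarrow> bool" where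
  "Mr_model d r sc \<rho> w \<longleftrightarrow>
     Lr_module d r sc \<rho> \<and>
     (\<forall>k\<in>Bplus d. \<rho> k w = 0) \<and>
     (\<forall>W. module.subspace sc W \<and> w \<in> W \<and> (\<forall>k\<in>Keys d. \<forall>x\<in>W. \<rho> k x \<in> W) \<longrightarrow> W = UNIV) \<and>
     (\<forall>S c. finite S \<and> (\<forall>M\<in>S. set_mset M \<subseteq> Bminus d) \<and>
        (\<Sum>M\<in>S. sc (c M) (opw \<rho> (sorted_list_of_multiset M) w)) = 0 \<longrightarrow> (\<forall>M\<in>S. c M = 0))"

text \<open>M_r^{(1)} = U(L_r^{(1)}) 1: the smallest subspace containing w and stable under the
  generators v^{11}(m,n), m \<le> n, of L_r^{(1)}.\<close>
definition stable1 :: "(key \<Rightarrow> 'v \<Rightarrow> 'v) \<Rightarrow> 'v set \<Rightarrow> bool" where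
  "stable1 \<rho> W \<longleftrightarrow> (\<forall>m n x. m \<le> n \<longrightarrow> x \<in> W \<longrightarrow> \<rho> (1,1,m,n) x \<in> W)"

definition Mone :: "(complex \<Rightarrow> 'v \<Rightarrow> 'v) \<Rightarrow> (key \<Rightarrow> 'v \<Rightarrow> 'v::ab_group_add) \<Rightarrow> 'v \<Rightarrow> 'v set" where
  "Mone sc \<rho> w = \<Inter>{W. module.subspace sc W \<and> w \<in> W \<and> stable1 \<rho> W}"

definition reducible1 :: "(complex \<Rightarrow> 'v \<Rightarrow> 'v) \<Rightarrow> (key \<Rightarrow> 'v \<Rightarrow> 'v::ab_group_add) \<Rightarrow> 'v set \<Rightarrow> bool" where
  "reducible1 sc \<rho> U \<longleftrightarrow>
     (\<exists>W. module.subspace sc W \<and> W \<subseteq> U \<and> stable1 \<rho> W \<and> W \<noteq> {0} \<and> W \<noteq> U)"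

definition detV :: "(complex \<Rightarrow> 'v \<Rightarrow> 'v) \<Rightarrow> (key \<Rightarrow> 'v \<Rightarrow> 'v::ab_group_add) \<Rightarrow> nat \<Rightarrow> 'v \<Rightarrow> 'v" where
  "detV sc \<rho> p x = (\<Sum>\<sigma>\<in>{\<sigma>. \<sigma> permutes {1..p}}.
      sc (of_int (sign \<sigma>)) (opw \<rho> (map (\<lambda>q. (1, 1, - int q, - int (\<sigma> q))) [1..<p+1]) x))"

end

theory Submission
  imports Defs
begin

declare One_nat_def [simp del]

locale LM =
  fixes d :: nat and r :: complex and sc :: "complex \<Rightarrow> 'v::ab_group_add \<Rightarrow> 'v"
    and \<rho> :: "key \<Rightarrow> 'v \<Rightarrow> 'v" and w :: 'v
  assumes MR: "Mr_model d r sc \<rho> w" and d1: "1 \<le> d"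
begin

lemma LR: "Lr_module d r sc \<rho>" by (rule MR[unfolded Mr_model_def, THEN conjunct1])

lemma vs_ax: "vector_space sc" by (rule LR[unfolded Lr_module_def, THEN conjunct1])

sublocale vs: vector_space sc by (rule vs_ax)

lemma key1[simp]: "(1,1,m,n) \<in> Keys d" using d1 unfolding Keys_def by simp

abbreviation R where "R m n \<equiv> \<rho> (1,1,m,n)"

lemma linR: "Vector_Spaces.linear sc sc (R m n)"
proof -
  have "\<forall>k\<in>Keys d. Vector_Spaces.linear sc sc (\<rho> k)" using LR unfolding Lr_module_def by blast
  then show ?thesis using key1 by blast
qed

lemma R_add: "R m n (x + y) = R m n x + R m n y"
  and R_sc: "R m n (sc c x) = sc c (R m n x)"
  and R_0[simp]: "R m n 0 = 0"
  and R_sum: "R m n (sum f S) = (\<Sum>x\<in>S. R m n (f x))"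
  and R_neg: "R m n (- x) = - R m n x"
  and R_diff: "R m n (x - y) = R m n x - R m n y"
proof -
  interpret l: Vector_Spaces.linear sc sc "R m n" by (rule linR)
  show "R m n (x + y) = R m n x + R m n y" by (rule l.add)
  show "R m n (sc c x) = sc c (R m n x)" by (rule l.scale)
  show "R m n 0 = 0" by (rule l.zero)
  show "R m n (sum f S) = (\<Sum>x\<in>S. R m n (f x))" by (rule l.sum)
  show "R m n (- x) = - R m n x" by (rule l.neg)
  show "R m n (x - y) = R m n x - R m n y" by (rule l.diff)
qed

definition Rr where "Rr m n x = rho_r r sc \<rho> (1,1,m,n) x"

lemma Rr_def': "Rr m n x = R m n x + sc ((r - 1) * of_int (cst (1,1,m,n))) x"
  unfolding Rr_def rho_r_def by simp

lemma comm1: "R m n (R p q x) = R p q (R m n x)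
   + (sc (dlt (n + p = 0) n) (Rr m q x) + sc (dlt (n + q = 0) n) (Rr m p x)
   + sc (dlt (m + p = 0) m) (Rr q n x) + sc (dlt (m + q = 0) m) (Rr p n x))"
proof -
  have "\<forall>i j m n k l p q x. (i,j,m,n) \<in> Keys d \<longrightarrow> (k,l,p,q) \<in> Keys d \<longrightarrow>
      \<rho> (i,j,m,n) (\<rho> (k,l,p,q) x) - \<rho> (k,l,p,q) (\<rho> (i,j,m,n) x) =
        sc (dlt (j = k \<and> n + p = 0) n) (rho_r r sc \<rho> (i,l,m,q) x)
      + sc (dlt (j = l \<and> n + q = 0) n) (rho_r r sc \<rho> (i,k,m,p) x)
      + sc (dlt (i = k \<and> m + p = 0) m) (rho_r r sc \<rho> (l,j,q,n) x)
      + sc (dlt (i = l \<and> m + q = 0) m) (rho_r r sc \<rho> (k,j,p,n) x)"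
    by (rule LR[unfolded Lr_module_def, THEN conjunct2, THEN conjunct2, THEN conjunct2])
  from this[rule_format, OF key1 key1, of m n p q x]
  have "R m n (R p q x) - R p q (R m n x) = sc (dlt (n + p = 0) n) (Rr m q x) + sc (dlt (n + q = 0) n) (Rr m p x)
   + sc (dlt (m + p = 0) m) (Rr q n x) + sc (dlt (m + q = 0) m) (Rr p n x)"
    unfolding Rr_def by (simp only: simp_thms)
  then show ?thesis by (simp only: diff_eq_eq add.assoc add.commute)
qed

lemma symm1: "R m n x = R n m x + sc (if m + n = 0 then of_int m else 0) x"
proof -
  have "\<forall>i j m n x. (i,j,m,n) \<in> Keys d \<longrightarrow>
        \<rho> (i,j,m,n) x = \<rho> (j,i,n,m) x + sc (if i = j \<and> m + n = 0 then of_int m else 0) x"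
    by (rule LR[unfolded Lr_module_def, THEN conjunct2, THEN conjunct2, THEN conjunct1])
  from this[rule_format, of 1 1 m n x, OF key1] show ?thesis by simp
qed

lemma symm1': assumes "m + n \<noteq> 0" shows "R m n = R n m"
proof
  fix x show "R m n x = R n m x" using symm1[of m n x] assms by simp
qed

lemma Bplus_all: "\<forall>k\<in>Bplus d. \<rho> k w = 0"
  by (rule MR[unfolded Mr_model_def, THEN conjunct2, THEN conjunct1])

lemma Bplus_w: "(1,1,m,n) \<in> Bplus d \<Longrightarrow> \<rho> (1,1,m,n) w = 0"
  using Bplus_all by blast

lemma Rw_plus: assumes "m \<ge> 0 \<or> n \<ge> 0" "m + n \<noteq> 0" shows "R m n w = 0"
proof (cases "m \<le> n")
  case True
  then have "(1,1,m,n) \<in> Bplus d" using assms d1 unfolding Bplus_def Bnorm_def Keys_def by simp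
  then show ?thesis using Bplus_w by blast
next
  case False
  then have "(1,1,n,m) \<in> Bplus d" using assms d1 unfolding Bplus_def Bnorm_def Keys_def by auto
  then show ?thesis using Bplus_w symm1'[OF assms(2)] by simp
qed

lemma Rw_zero: "R m (-m) w = sc (of_int (max m 0)) w"
proof (cases "m \<le> 0")
  case True
  then have "(1,1,m,-m) \<in> Bplus d" using d1 unfolding Bplus_def Bnorm_def Keys_def by simp
  then show ?thesis using Bplus_w True by simp
next
  case False
  then have "(1,1,-m,m) \<in> Bplus d" using d1 unfolding Bplus_def Bnorm_def Keys_def by simp
  then have "R (-m) m w = 0" using Bplus_w by blast
  moreover have "R m (-m) w = R (-m) m w + sc (of_int m) w" using symm1[of m "-m" w] by simp
  ultimately show ?thesis using False by simp
qed



lemma dlt_False[simp]: "dlt False c = 0" unfolding dlt_def by simp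
lemma dlt_True[simp]: "dlt True c = of_int c" unfolding dlt_def by simp

definition kf :: "nat \<times> nat \<Rightarrow> key" where
  "kf a = (1, 1, - int (max 1 (fst a)), - int (max 1 (snd a)))"

definition A :: "nat \<times> nat \<Rightarrow> 'v \<Rightarrow> 'v" where "A a = \<rho> (kf a)"

lemma A_R: "A a = R (- int (max 1 (fst a))) (- int (max 1 (snd a)))"
  unfolding A_def kf_def by simp

lemma A_add: "A a (x + y) = A a x + A a y"
  and A_sc: "A a (sc c x) = sc c (A a x)"
  and A_0[simp]: "A a 0 = 0"
  and A_sum: "A a (sum f S) = (\<Sum>x\<in>S. A a (f x))"
  and A_neg: "A a (- x) = - A a x"
  and A_diff: "A a (x - y) = A a x - A a y"
  unfolding A_R by (rule R_add R_sc R_0 R_sum R_neg R_diff)+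

lemma A_comm: "A a (A b x) = A b (A a x)"
  unfolding A_R by (subst comm1) simp

lemma A_swap: "A (s, t) = A (t, s)"
  unfolding A_R fst_conv snd_conv by (rule symm1') simp

definition opM :: "(nat \<times> nat) multiset \<Rightarrow> 'v \<Rightarrow> 'v" where
  "opM M = fold_mset (\<lambda>a f. A a \<circ> f) id M"

lemma cfc: "comp_fun_commute (\<lambda>a f. A a \<circ> f)"
  by unfold_locales (auto simp: fun_eq_iff A_comm)

lemma opM_empty[simp]: "opM {#} x = x" unfolding opM_def by simp

lemma opM_add_mset[simp]: "opM (add_mset a M) x = A a (opM M x)"
  unfolding opM_def by (simp add: comp_fun_commute.fold_mset_add_mset[OF cfc])

lemma A_opM: "A a (opM M x) = opM M (A a x)"
  by (induct M arbitrary: x) (simp_all add: A_comm)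

lemma opM_union: "opM (M + N) x = opM M (opM N x)"
  by (induct M arbitrary: x) simp_all

lemma opM_comm: "opM M (opM N x) = opM N (opM M x)"
  by (metis opM_union add.commute)

lemma opM_add: "opM M (x + y) = opM M x + opM M y"
  by (induct M arbitrary: x y) (simp_all add: A_add)
lemma opM_sc: "opM M (sc c x) = sc c (opM M x)"
  by (induct M arbitrary: x) (simp_all add: A_sc)
lemma opM_0[simp]: "opM M 0 = 0"
  by (induct M) simp_all
lemma opM_sum: "opM M (sum f S) = (\<Sum>x\<in>S. opM M (f x))"
  by (induct S rule: infinite_finite_induct) (simp_all add: opM_add)
lemma opM_diff: "opM M (x - y) = opM M x - opM M y"
  by (induct M arbitrary: x y) (simp_all add: A_diff)

lemma opM_swap: "opM (image_mset prod.swap M) x = opM M x"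
proof (induct M arbitrary: x)
  case (add a M)
  obtain s t where "a = (s, t)" by (cases a)
  then show ?case using add by (simp add: A_swap)
qed simp

lemma opM_commute_gen:
  assumes "\<And>a x. a \<in># M \<Longrightarrow> T (A a x) = A a (T x)"
  shows "T (opM M x) = opM M (T x)"
  using assms by (induct M arbitrary: x) simp_all

definition OP :: "(nat \<Rightarrow> nat \<times> nat) \<Rightarrow> nat set \<Rightarrow> 'v \<Rightarrow> 'v" where
  "OP f S = opM (image_mset f (mset_set S))"

lemma OP_insert: "finite S \<Longrightarrow> q \<notin> S \<Longrightarrow> OP f (insert q S) x = A (f q) (OP f S x)"
  unfolding OP_def by simp

lemma Leib:
  assumes fin: "finite S"
    and T: "\<And>q x. q \<in> S \<Longrightarrow> T (A (f q) x) = A (f q) (T x) + F q x"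
    and F: "\<And>q N x. q \<in> S \<Longrightarrow> F q (opM N x) = opM N (F q x)"
  shows "T (OP f S x) = OP f S (T x) + (\<Sum>q\<in>S. OP f (S - {q}) (F q x))"
  using fin T F
proof (induct S arbitrary: x rule: finite_induct)
  case empty then show ?case by (simp add: OP_def)
next
  case (insert q S)
  have IH: "T (OP f S y) = OP f S (T y) + (\<Sum>q\<in>S. OP f (S - {q}) (F q y))" for y
    using insert by auto
  have "T (OP f (insert q S) x) = T (A (f q) (OP f S x))" using insert by (simp add: OP_insert)
  also have "\<dots> = A (f q) (T (OP f S x)) + F q (OP f S x)" using insert by simp
  also have "F q (OP f S x) = OP f S (F q x)" unfolding OP_def using insert by simp
  also have "A (f q) (T (OP f S x)) = OP f (insert q S) (T x) + (\<Sum>q'\<in>S. OP f (insert q S - {q'}) (F q' x))"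
  proof -
    have "A (f q) (T (OP f S x)) = A (f q) (OP f S (T x)) + (\<Sum>q'\<in>S. A (f q) (OP f (S - {q'}) (F q' x)))"
      by (simp add: IH A_add A_sum)
    also have "(\<Sum>q'\<in>S. A (f q) (OP f (S - {q'}) (F q' x))) = (\<Sum>q'\<in>S. OP f (insert q S - {q'}) (F q' x))"
    proof (rule sum.cong)
      fix q' assume "q' \<in> S"
      then have "insert q S - {q'} = insert q (S - {q'})" using insert by auto
      then show "A (f q) (OP f (S - {q'}) (F q' x)) = OP f (insert q S - {q'}) (F q' x)"
        using insert by (simp add: OP_insert)
    qed simp
    finally show ?thesis using insert by (simp add: OP_insert)
  qed
  finally show ?case using insert by (simp add: add.commute add.left_commute)
qed


lemma A_st: "1 \<le> s \<Longrightarrow> 1 \<le> t \<Longrightarrow> A (s,t) = R (- int s) (- int t)"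
  unfolding A_R by (simp add: max_def)

lemma cst0: "x \<le> 0 \<Longrightarrow> cst (a,b,x,y) = 0" unfolding cst_def by simp

lemma E_A:
  assumes "1 \<le> s" "1 \<le> t" "1 \<le> l"
  shows "R (int m) (- int l) (A (s,t) x) = A (s,t) (R (int m) (- int l) x)
     + sc (of_nat m) ((if s = m then A (t,l) x else 0) + (if t = m then A (s,l) x else 0))"
proof -
  have e: "A (s,t) = R (- int s) (- int t)" "A (t,l) = R (- int t) (- int l)" "A (s,l) = R (- int s) (- int l)"
    using assms by (simp_all add: A_st)
  have c1: "Rr (- int t) (- int l) x = R (- int t) (- int l) x" unfolding Rr_def' using assms by (simp add: cst0)
  have c2: "Rr (- int s) (- int l) x = R (- int s) (- int l) x" unfolding Rr_def' using assms by (simp add: cst0)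
  show ?thesis unfolding e
    apply (subst comm1)
    using assms by (auto simp: c1 c2 dlt_def vs.scale_right_distrib)
qed


lemma OP_linear:
  "OP f S (x + y) = OP f S x + OP f S y" "OP f S (sc c x) = sc c (OP f S x)" "OP f S 0 = 0"
  "OP f S (sum g T) = (\<Sum>t\<in>T. OP f S (g t))" "OP f S (x - y) = OP f S x - OP f S y"
  unfolding OP_def by (simp_all add: opM_add opM_sc opM_sum opM_diff)

lemma OP_remove: "finite S \<Longrightarrow> q \<in> S \<Longrightarrow> OP f S x = A (f q) (OP f (S - {q}) x)"
  by (metis OP_insert finite_Diff insert_Diff Diff_iff singletonI)

lemma OP_cong: assumes "\<And>q. q \<in> S \<Longrightarrow> f q = g q" shows "OP f S = OP g S"
proof (cases "finite S")
  case True then show ?thesis unfolding OP_def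
    by (intro arg_cong[where f=opM] image_mset_cong) (simp add: assms)
next
  case False then show ?thesis unfolding OP_def by simp
qed

lemma two_neq: fixes x :: 'v shows "x = - x \<Longrightarrow> x = 0"
proof -
  assume "x = - x"
  then have "x + x = 0" by (metis add.right_inverse)
  then have "sc 2 x = 0" by (metis one_add_one vs.scale_left_distrib vs.scale_one)
  then show "x = 0" by simp
qed

lemma opw_cons: "opw \<rho> (k # ks) x = \<rho> k (opw \<rho> ks x)" unfolding opw_def by simp
lemma opw_nil: "opw \<rho> [] x = x" unfolding opw_def by simp
lemma opw_append: "opw \<rho> (xs @ ys) x = opw \<rho> xs (opw \<rho> ys x)" unfolding opw_def by simp

lemma opw_map: "(\<And>q. q \<in> set xs \<Longrightarrow> 1 \<le> q \<and> 1 \<le> g q) \<Longrightarrow>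
   opw \<rho> (map (\<lambda>q. (1, 1, - int q, - int (g q))) xs) y = opM (mset (map (\<lambda>q. (q, g q)) xs)) y"
proof (induct xs)
  case Nil then show ?case by (simp add: opw_nil)
next
  case (Cons a xs)
  then have "A (a, g a) = R (- int a) (- int (g a))" by (simp add: A_st)
  then show ?case using Cons by (simp add: opw_cons)
qed


definition lowk :: "key \<Rightarrow> bool" where
  "lowk k \<longleftrightarrow> (\<exists>s t. k = (1,1,s,t) \<and> s < 0 \<and> t < 0)"

definition kp :: "key \<Rightarrow> nat \<times> nat" where
  "kp k = (case k of (i,j,s,t) \<Rightarrow> (nat (- s), nat (- t)))"

definition kn :: "nat \<times> nat \<Rightarrow> key" where
  "kn a = (1, 1, - int (max (fst a) (snd a)), - int (min (fst a) (snd a)))"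

definition mono where "mono M = opw \<rho> (sorted_list_of_multiset M) w"

lemma A_kp: assumes "lowk k" shows "A (kp k) = \<rho> k"
proof -
  obtain s t where k: "k = (1,1,s,t)" "s < 0" "t < 0" using assms unfolding lowk_def by blast
  have "A (nat (- s), nat (- t)) = R (- int (nat (- s))) (- int (nat (- t)))"
    by (rule A_st) (use k in simp_all)
  then show ?thesis unfolding k kp_def using k by simp
qed

lemma opw_low: "(\<And>k. k \<in> set ks \<Longrightarrow> lowk k) \<Longrightarrow> opw \<rho> ks x = opM (mset (map kp ks)) x"
proof (induct ks)
  case Nil then show ?case by (simp add: opw_nil)
next
  case (Cons k ks) then show ?case by (simp add: opw_cons A_kp)
qed

lemma kn_low: "1 \<le> fst a \<Longrightarrow> 1 \<le> snd a \<Longrightarrow> lowk (kn a)"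
  unfolding lowk_def kn_def by auto

lemma kn_Bminus: "1 \<le> fst a \<Longrightarrow> 1 \<le> snd a \<Longrightarrow> kn a \<in> Bminus d"
  unfolding kn_def Bminus_def Bnorm_def Keys_def using d1 by auto

lemma A_kpkn: "1 \<le> fst a \<Longrightarrow> 1 \<le> snd a \<Longrightarrow> A (kp (kn a)) = A a"
proof -
  assume "1 \<le> fst a" "1 \<le> snd a"
  obtain s t where a: "a = (s,t)" by (cases a)
  have "kp (kn a) = (max s t, min s t)" unfolding a kn_def kp_def by simp
  moreover have "A (max s t, min s t) = A (s,t)" by (cases "s \<le> t") (simp_all add: max_def min_def A_swap)
  ultimately show ?thesis unfolding a by simp
qed

lemma opM_cong_img: "(\<And>a. a \<in># M \<Longrightarrow> A (f a) = A a) \<Longrightarrow> opM (image_mset f M) x = opM M x"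
  by (induct M arbitrary: x) simp_all

lemma mono_opM: assumes "\<And>a. a \<in># M \<Longrightarrow> 1 \<le> fst a \<and> 1 \<le> snd a"
  shows "mono (image_mset kn M) = opM M w"
proof -
  have "mono (image_mset kn M) = opM (mset (map kp (sorted_list_of_multiset (image_mset kn M)))) w"
    unfolding mono_def by (rule opw_low) (use assms kn_low in auto)
  also have "mset (map kp (sorted_list_of_multiset (image_mset kn M))) = image_mset (kp \<circ> kn) M"
    by (simp add: image_mset.compositionality)
  also have "opM (image_mset (kp \<circ> kn) M) w = opM M w"
    by (rule opM_cong_img) (use assms A_kpkn in auto)
  finally show ?thesis .
qed

lemma indep_ax:
  assumes "finite S" "\<And>M. M \<in> S \<Longrightarrow> set_mset M \<subseteq> Bminus d" "(\<Sum>M\<in>S. sc (c M) (mono M)) = 0" "M \<in> S"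
  shows "c M = 0"
proof -
  have "\<forall>S c. finite S \<and> (\<forall>M\<in>S. set_mset M \<subseteq> Bminus d) \<and>
        (\<Sum>M\<in>S. sc (c M) (opw \<rho> (sorted_list_of_multiset M) w)) = 0 \<longrightarrow> (\<forall>M\<in>S. c M = 0)"
    by (rule MR[unfolded Mr_model_def, THEN conjunct2, THEN conjunct2, THEN conjunct2])
  then show ?thesis using assms unfolding mono_def by blast
qed

lemma mono_empty: "mono {#} = w" unfolding mono_def by (simp add: opw_nil)

lemma w_notin_span: "w \<notin> vs.span (mono ` {M. set_mset M \<subseteq> Bminus d \<and> M \<noteq> {#}})"
proof
  let ?B = "{M. set_mset M \<subseteq> Bminus d \<and> M \<noteq> {#}}"
  assume "w \<in> vs.span (mono ` ?B)"
  then have "\<exists>t u. w = (\<Sum>v\<in>t. sc (u v) v) \<and> finite t \<and> t \<subseteq> mono ` ?B"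
    unfolding vs.span_explicit by simp
  then obtain t u where t: "finite t" "t \<subseteq> mono ` ?B" and wt: "w = (\<Sum>v\<in>t. sc (u v) v)"
    by blast
  define Mv where "Mv v = (SOME M. M \<in> ?B \<and> mono M = v)" for v
  have Mv: "Mv v \<in> ?B \<and> mono (Mv v) = v" if "v \<in> t" for v
    unfolding Mv_def
  proof (rule someI_ex)
    have "v \<in> mono ` ?B" using t(2) that by (rule subsetD)
    then obtain M where "M \<in> ?B" "v = mono M" by (rule imageE)
    then show "\<exists>M. M \<in> ?B \<and> mono M = v" by blast
  qed
  have inj: "inj_on Mv t"
  proof (rule inj_onI)
    fix x y assume xy: "x \<in> t" "y \<in> t" "Mv x = Mv y"
    have "x = mono (Mv x)" using Mv[OF xy(1)] by simp
    also have "\<dots> = mono (Mv y)" using xy(3) by simp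
    also have "\<dots> = y" using Mv[OF xy(2)] by simp
    finally show "x = y" .
  qed
  define S where "S = insert {#} (Mv ` t)"
  define c where "c M = (if M = {#} then 1 else - u (mono M))" for M
  have e0: "{#} \<notin> Mv ` t"
  proof
    assume "{#} \<in> Mv ` t"
    then obtain v where v: "v \<in> t" "{#} = Mv v" by (rule imageE)
    show False using Mv[OF v(1)] v(2) by simp
  qed
  have fin: "finite (Mv ` t)" using t(1) by simp
  have "(\<Sum>M\<in>S. sc (c M) (mono M)) = sc (c {#}) (mono {#}) + (\<Sum>M\<in>Mv ` t. sc (c M) (mono M))"
    unfolding S_def by (rule sum.insert[OF fin e0])
  also have "(\<Sum>M\<in>Mv ` t. sc (c M) (mono M)) = (\<Sum>M\<in>Mv ` t. sc (- u (mono M)) (mono M))"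
  proof (rule sum.cong[OF refl])
    fix M assume "M \<in> Mv ` t" then have "M \<noteq> {#}" using e0 by blast
    then show "sc (c M) (mono M) = sc (- u (mono M)) (mono M)" unfolding c_def by simp
  qed
  also have "sc (c {#}) (mono {#}) = w" unfolding c_def mono_empty by simp
  also have "(\<Sum>M\<in>Mv ` t. sc (- u (mono M)) (mono M)) = (\<Sum>v\<in>t. sc (- u v) v)"
    by (subst sum.reindex[OF inj]) (rule sum.cong, auto simp: Mv)
  also have "\<dots> = - w" unfolding wt by (simp add: sum_negf)
  finally have z: "(\<Sum>M\<in>S. sc (c M) (mono M)) = 0" by simp
  have "c {#} = 0"
  proof (rule indep_ax[OF _ _ z])
    show "finite S" unfolding S_def using fin by simp
    show "{#} \<in> S" unfolding S_def by simp
    fix M assume "M \<in> S"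
    then consider "M = {#}" | v where "v \<in> t" "M = Mv v" unfolding S_def by blast
    then show "set_mset M \<subseteq> Bminus d"
    proof cases
      case 1 then show ?thesis by simp
    next
      case 2 then show ?thesis using Mv[OF 2(1)] by simp
    qed
  qed
  then show False unfolding c_def by simp
qed


lemma R_span:
  assumes "\<And>g. g \<in> Gs \<Longrightarrow> R m n g \<in> vs.span Hs" and "x \<in> vs.span Gs"
  shows "R m n x \<in> vs.span Hs"
  using assms(2)
proof (induct rule: vs.span_induct_alt)
  case base then show ?case by (simp add: vs.span_zero)
next
  case (step c x y) then show ?case
    by (simp add: R_add R_sc vs.span_add vs.span_scale assms(1) vs.span_base)
qed

definition lowl :: "key list \<Rightarrow> bool" where "lowl ks \<longleftrightarrow> (\<forall>k\<in>set ks. lowk k)"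

definition en :: "key list \<Rightarrow> int" where
  "en ks = sum_list (map (\<lambda>k. case k of (i,j,s,t) \<Rightarrow> - (s + t)) ks)"

definition Gr :: "int \<Rightarrow> 'v set" where
  "Gr N = vs.span {opw \<rho> ks w | ks. lowl ks \<and> en ks = N}"

lemma en_cons: "en ((1,1,s,t) # ks) = - (s + t) + en ks" unfolding en_def by simp

lemma Gr_gen: "lowl ks \<Longrightarrow> en ks = N \<Longrightarrow> opw \<rho> ks w \<in> Gr N"
  unfolding Gr_def by (rule vs.span_base) blast

lemma dlt_in: "(P \<Longrightarrow> v \<in> Gr N) \<Longrightarrow> sc (dlt P c) v \<in> Gr N"
  by (cases P) (simp_all add: Gr_def vs.span_scale vs.span_zero)

lemma low_map: assumes "s < 0" "t < 0" "x \<in> Gr N" shows "R s t x \<in> Gr (N - s - t)"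
  using assms(3) unfolding Gr_def
proof (rule R_span[rotated])
  fix g assume "g \<in> {opw \<rho> ks w | ks. lowl ks \<and> en ks = N}"
  then obtain ks where g: "g = opw \<rho> ks w" "lowl ks" "en ks = N" by blast
  have "R s t g = opw \<rho> ((1,1,s,t) # ks) w" unfolding g by (simp add: opw_cons)
  moreover have "lowl ((1,1,s,t) # ks)" using g assms unfolding lowl_def lowk_def by auto
  moreover have "en ((1,1,s,t) # ks) = N - s - t" using g by (simp add: en_cons)
  ultimately have "R s t g \<in> Gr (N - s - t)" using Gr_gen by simp
  then show "R s t g \<in> vs.span {opw \<rho> ks w | ks. lowl ks \<and> en ks = N - s - t}" unfolding Gr_def .
qed

lemma Rr_in:
  assumes IH: "\<And>m n. R m n z \<in> Gr (e - m - n)" and z: "z \<in> Gr e" and N: "N = e - x - y"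
  shows "Rr x y z \<in> Gr N"
proof -
  have "sc ((r - 1) * of_int (cst (1,1,x,y))) z \<in> Gr N"
  proof (cases "cst (1,1,x,y) = 0")
    case True then show ?thesis by (simp add: Gr_def vs.span_zero)
  next
    case False
    then have "x + y = 0" unfolding cst_def by (simp split: if_splits)
    then have "N = e" using N by simp
    then show ?thesis using z unfolding Gr_def by (simp add: vs.span_scale)
  qed
  then show ?thesis unfolding Rr_def' N using IH[of x y] by (simp add: Gr_def vs.span_add)
qed

lemma grade: "lowl ks \<Longrightarrow> R m n (opw \<rho> ks w) \<in> Gr (en ks - m - n)"
proof (induct ks arbitrary: m n)
  case Nil
  show ?case
  proof (cases "m < 0 \<and> n < 0")
    case True
    have "R m n (opw \<rho> [] w) = opw \<rho> [(1,1,m,n)] w" by (simp add: opw_nil opw_cons)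
    moreover have "lowl [(1,1,m,n)]" using True unfolding lowl_def lowk_def by simp
    moreover have "en [(1,1,m,n)] = en [] - m - n" unfolding en_def by simp
    ultimately show ?thesis by (metis Gr_gen)
  next
    case False
    show ?thesis
    proof (cases "m + n = 0")
      case True
      then have n: "n = - m" by simp
      have "w \<in> Gr 0" using Gr_gen[of "[]" 0] by (simp add: opw_nil lowl_def en_def)
      then have "sc (of_int (max m 0)) w \<in> Gr 0" unfolding Gr_def by (rule vs.span_scale)
      then show ?thesis unfolding n using Rw_zero[of m] by (simp add: opw_nil en_def)
    next
      case F: False
      have "R m n w = 0" by (rule Rw_plus) (use False F in auto)
      then show ?thesis by (simp add: opw_nil Gr_def vs.span_zero)
    qed
  qed
next
  case (Cons k ks)
  obtain s t where k: "k = (1,1,s,t)" "s < 0" "t < 0" using Cons(2) unfolding lowl_def lowk_def by auto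
  have lk: "lowl ks" using Cons(2) unfolding lowl_def by simp
  let ?z = "opw \<rho> ks w"
  let ?e = "en ks"
  have IH: "\<And>m n. R m n ?z \<in> Gr (?e - m - n)" by (rule Cons(1)[OF lk])
  have z: "?z \<in> Gr ?e" using Gr_gen[OF lk refl] .
  have target: "en (k # ks) - m - n = ?e - m - n - s - t" unfolding k en_cons by simp
  have "R m n (opw \<rho> (k # ks) w) = R s t (R m n ?z)
     + (sc (dlt (n + s = 0) n) (Rr m t ?z) + sc (dlt (n + t = 0) n) (Rr m s ?z)
     + sc (dlt (m + s = 0) m) (Rr t n ?z) + sc (dlt (m + t = 0) m) (Rr s n ?z))"
    unfolding k opw_cons by (rule comm1)
  also have "\<dots> \<in> Gr (?e - m - n - s - t)"
  proof -
    have a: "R s t (R m n ?z) \<in> Gr (?e - m - n - s - t)" by (rule low_map[OF k(2,3) IH])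
    have b1: "sc (dlt (n + s = 0) n) (Rr m t ?z) \<in> Gr (?e - m - n - s - t)"
      by (rule dlt_in, rule Rr_in[OF IH z]) simp
    have b2: "sc (dlt (n + t = 0) n) (Rr m s ?z) \<in> Gr (?e - m - n - s - t)"
      by (rule dlt_in, rule Rr_in[OF IH z]) simp
    have b3: "sc (dlt (m + s = 0) m) (Rr t n ?z) \<in> Gr (?e - m - n - s - t)"
      by (rule dlt_in, rule Rr_in[OF IH z]) simp
    have b4: "sc (dlt (m + t = 0) m) (Rr s n ?z) \<in> Gr (?e - m - n - s - t)"
      by (rule dlt_in, rule Rr_in[OF IH z]) simp
    show ?thesis using a b1 b2 b3 b4 unfolding Gr_def by (simp add: vs.span_add)
  qed
  finally show ?case unfolding target .
qed

definition Hp :: "'v set" where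
  "Hp = vs.span {opw \<rho> ks w | ks. lowl ks \<and> ks \<noteq> []}"

definition Full :: "'v set" where
  "Full = vs.span {opw \<rho> ks w | ks. lowl ks}"

lemma en_pos: "lowl ks \<Longrightarrow> en ks \<ge> 0"
proof (induct ks)
  case Nil then show ?case by (simp add: en_def)
next
  case (Cons k ks)
  obtain s t where "k = (1,1,s,t)" "s < 0" "t < 0" using Cons(2) unfolding lowl_def lowk_def by auto
  then show ?case using Cons unfolding lowl_def by (simp add: en_cons)
qed

lemma Gr_Hp: "0 < N \<Longrightarrow> Gr N \<subseteq> Hp"
  unfolding Gr_def Hp_def
proof (rule vs.span_mono)
  assume N: "0 < N"
  show "{opw \<rho> ks w | ks. lowl ks \<and> en ks = N} \<subseteq> {opw \<rho> ks w | ks. lowl ks \<and> ks \<noteq> []}"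
  proof
    fix x assume "x \<in> {opw \<rho> ks w | ks. lowl ks \<and> en ks = N}"
    then obtain ks where "x = opw \<rho> ks w" "lowl ks" "en ks = N" by blast
    moreover have "ks \<noteq> []" using N \<open>en ks = N\<close> by (auto simp: en_def)
    ultimately show "x \<in> {opw \<rho> ks w | ks. lowl ks \<and> ks \<noteq> []}" by blast
  qed
qed

lemma Hp_Full: "Hp \<subseteq> Full"
  unfolding Hp_def Full_def by (rule vs.span_mono) blast

lemma neg_to_Hp: assumes "m + n < 0" "x \<in> Full" shows "R m n x \<in> Hp"
  using assms(2) unfolding Full_def Hp_def
proof (rule R_span[rotated])
  fix g assume "g \<in> {opw \<rho> ks w | ks. lowl ks}"
  then obtain ks where g: "g = opw \<rho> ks w" "lowl ks" by blast
  have "R m n g \<in> Gr (en ks - m - n)" unfolding g by (rule grade[OF g(2)])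
  moreover have "0 < en ks - m - n" using en_pos[OF g(2)] assms(1) by simp
  ultimately show "R m n g \<in> vs.span {opw \<rho> ks w | ks. lowl ks \<and> ks \<noteq> []}"
    using Gr_Hp unfolding Hp_def by blast
qed

lemma w_notin_Hp: "w \<notin> Hp"
proof -
  have "Hp \<subseteq> vs.span (mono ` {M. set_mset M \<subseteq> Bminus d \<and> M \<noteq> {#}})"
    unfolding Hp_def
  proof (rule vs.span_mono, rule subsetI)
    fix x assume "x \<in> {opw \<rho> ks w | ks. lowl ks \<and> ks \<noteq> []}"
    then obtain ks where x: "x = opw \<rho> ks w" "lowl ks" "ks \<noteq> []" by blast
    have lk: "\<And>k. k \<in> set ks \<Longrightarrow> lowk k" using x(2) unfolding lowl_def by blast
    have kp1: "1 \<le> fst (kp k) \<and> 1 \<le> snd (kp k)" if "k \<in> set ks" for k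
      using lk[OF that] unfolding lowk_def kp_def by auto
    let ?M = "mset (map kp ks)"
    have "x = opM ?M w" unfolding x(1) by (rule opw_low[OF lk])
    also have "\<dots> = mono (image_mset kn ?M)" by (rule mono_opM[symmetric]) (use kp1 in auto)
    finally have "x = mono (image_mset kn ?M)" .
    moreover have "set_mset (image_mset kn ?M) \<subseteq> Bminus d"
    proof
      fix y assume "y \<in># image_mset kn ?M"
      then obtain k where k: "k \<in> set ks" "y = kn (kp k)" by auto
      then show "y \<in> Bminus d" using kn_Bminus[of "kp k"] kp1[OF k(1)] by simp
    qed
    moreover have "image_mset kn ?M \<noteq> {#}" using x(3) by simp
    ultimately show "x \<in> mono ` {M. set_mset M \<subseteq> Bminus d \<and> M \<noteq> {#}}" by blast
  qed
  then show ?thesis using w_notin_span by blast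
qed

end

locale LMP = LM +
  fixes p :: nat
  assumes p1: "1 \<le> p"
begin

definition Perm :: "(nat \<Rightarrow> nat) set" where "Perm = {\<sigma>. \<sigma> permutes {1..p}}"

definition DD where
  "DD y = (\<Sum>\<sigma>\<in>Perm. sc (of_int (sign \<sigma>)) (OP (\<lambda>q. (q, \<sigma> q)) {1..p} y))"

lemma finite_Perm[simp]: "finite Perm"
  unfolding Perm_def by (simp add: finite_permutations)

lemma Perm_range: "\<sigma> \<in> Perm \<Longrightarrow> q \<in> {1..p} \<Longrightarrow> \<sigma> q \<in> {1..p}"
  unfolding Perm_def using permutes_in_image[of \<sigma> "{1..p}" q] by blast

lemma Perm_inv: "\<sigma> \<in> Perm \<Longrightarrow> inv \<sigma> \<in> Perm"
  unfolding Perm_def by (simp add: permutes_inv)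

lemma Perm_inv_app: "\<sigma> \<in> Perm \<Longrightarrow> \<sigma> (inv \<sigma> q) = q" "\<sigma> \<in> Perm \<Longrightarrow> inv \<sigma> (\<sigma> q) = q"
  unfolding Perm_def by (simp_all add: permutes_inverses)

lemma Perm_permutation: "\<sigma> \<in> Perm \<Longrightarrow> permutation \<sigma>"
  unfolding Perm_def using permutation_permutes by blast

lemma detV_eq: "detV sc \<rho> p y = DD y"
  unfolding detV_def DD_def Perm_def
proof (rule sum.cong)
  fix \<sigma> assume "\<sigma> \<in> {\<sigma>. \<sigma> permutes {1..p}}"
  then have s: "\<sigma> \<in> Perm" unfolding Perm_def by simp
  have "opw \<rho> (map (\<lambda>q. (1, 1, - int q, - int (\<sigma> q))) [1..<p + 1]) y
        = opM (mset (map (\<lambda>q. (q, \<sigma> q)) [1..<p + 1])) y"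
  proof (rule opw_map)
    fix q assume "q \<in> set [1..<p + 1]"
    then have "q \<in> {1..p}" by auto
    then show "1 \<le> q \<and> 1 \<le> \<sigma> q" using Perm_range[OF s, of q] by auto
  qed
  also have "mset (map (\<lambda>q. (q, \<sigma> q)) [1..<p + 1]) = image_mset (\<lambda>q. (q, \<sigma> q)) (mset_set {1..p})"
  proof -
    have "mset [1..<p + 1] = mset_set {1..p}"
      by (metis mset_upt atLeastLessThanSuc_atLeastAtMost Suc_eq_plus1)
    then show ?thesis by (simp only: mset_map)
  qed
  finally show "sc (of_int (sign \<sigma>)) (opw \<rho> (map (\<lambda>q. (1, 1, - int q, - int (\<sigma> q))) [1..<p + 1]) y)
      = sc (of_int (sign \<sigma>)) (OP (\<lambda>q. (q, \<sigma> q)) {1..p} y)" unfolding OP_def by simp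
qed simp

lemma DD_add: "DD (x + y) = DD x + DD y"
  unfolding DD_def by (simp add: OP_linear vs.scale_right_distrib sum.distrib)
lemma DD_sc: "DD (sc c x) = sc c (DD x)"
  unfolding DD_def by (simp add: OP_linear vs.scale_sum_right mult.commute)
lemma DD_0[simp]: "DD 0 = 0"
  unfolding DD_def by (simp add: OP_linear)
lemma DD_opM: "DD (opM N x) = opM N (DD x)"
  unfolding DD_def OP_def by (simp add: opM_sum opM_sc opM_comm)
lemma DD_A: "DD (A a x) = A a (DD x)"
  using DD_opM[of "{#a#}" x] by simp


lemma Perm_permutes: "\<sigma> \<in> Perm \<Longrightarrow> \<sigma> permutes {1..p}" unfolding Perm_def by simp

lemma Perm_eq_iff: "\<sigma> \<in> Perm \<Longrightarrow> (\<sigma> q = m) = (q = inv \<sigma> m)"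
  using Perm_inv_app by metis


lemma sum_invol:
  assumes ab: "a \<in> {1..p}" "b \<in> {1..p}" "a \<noteq> b"
    and G: "\<And>\<sigma>. \<sigma> \<in> Perm \<Longrightarrow> G (\<sigma> \<circ> Transposition.transpose a b) = G \<sigma>"
  shows "(\<Sum>\<sigma>\<in>Perm. sc (of_int (sign \<sigma>)) (G \<sigma>)) = 0"
proof -
  define \<tau> where "\<tau> = Transposition.transpose a b"
  have tp: "\<tau> permutes {1..p}" unfolding \<tau>_def using ab by (simp add: permutes_swap_id)
  have st: "sign \<tau> = -1" unfolding \<tau>_def using ab by (simp add: sign_swap_id)
  have cl: "\<sigma> \<circ> \<tau> \<in> Perm" if "\<sigma> \<in> Perm" for \<sigma>
    using that tp unfolding Perm_def by (simp add: permutes_compose)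
  have inv: "\<sigma> \<circ> \<tau> \<circ> \<tau> = \<sigma>" for \<sigma> unfolding \<tau>_def by (simp add: o_assoc[symmetric])
  have "(\<Sum>\<sigma>\<in>Perm. sc (of_int (sign \<sigma>)) (G \<sigma>)) = (\<Sum>\<sigma>\<in>Perm. sc (of_int (sign (\<sigma> \<circ> \<tau>))) (G (\<sigma> \<circ> \<tau>)))"
    by (rule sum.reindex_bij_witness[where i="\<lambda>\<sigma>. \<sigma> \<circ> \<tau>" and j="\<lambda>\<sigma>. \<sigma> \<circ> \<tau>"]) (auto simp: inv cl)
  also have "\<dots> = (\<Sum>\<sigma>\<in>Perm. - sc (of_int (sign \<sigma>)) (G \<sigma>))"
  proof (rule sum.cong)
    fix \<sigma> assume s: "\<sigma> \<in> Perm"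
    have "sign (\<sigma> \<circ> \<tau>) = - sign \<sigma>"
      using sign_compose[OF Perm_permutation[OF s], of \<tau>] tp st permutation_permutes by auto
    then show "sc (of_int (sign (\<sigma> \<circ> \<tau>))) (G (\<sigma> \<circ> \<tau>)) = - sc (of_int (sign \<sigma>)) (G \<sigma>)"
      using G[OF s] unfolding \<tau>_def by simp
  qed simp
  also have "\<dots> = - (\<Sum>\<sigma>\<in>Perm. sc (of_int (sign \<sigma>)) (G \<sigma>))" by (simp add: sum_negf)
  finally show ?thesis by (rule two_neq)
qed

lemma Perm_inv_inv: "\<sigma> \<in> Perm \<Longrightarrow> inv (inv \<sigma>) = \<sigma>"
  using permutes_inv_inv Perm_permutes by blast

lemma sum_inv:
  "(\<Sum>\<sigma>\<in>Perm. sc (of_int (sign \<sigma>)) (G (inv \<sigma>))) = (\<Sum>\<sigma>\<in>Perm. sc (of_int (sign \<sigma>)) (G \<sigma>))"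
  by (rule sum.reindex_bij_witness[where i="inv" and j="inv"])
     (auto simp: Perm_inv_inv Perm_inv sign_inverse Perm_permutation)

lemma T2eq:
  assumes s: "\<sigma> \<in> Perm" and m: "m \<in> {1..p}"
  shows "OP (\<lambda>q. (q, \<sigma> q)) ({1..p} - {inv \<sigma> m}) z = OP (\<lambda>q. (q, inv \<sigma> q)) ({1..p} - {m}) z"
proof -
  let ?X = "{1..p} - {inv \<sigma> m}"
  have "OP (\<lambda>q. (q, \<sigma> q)) ?X z = opM (image_mset prod.swap (image_mset (\<lambda>q. (q, \<sigma> q)) (mset_set ?X))) z"
    unfolding OP_def by (rule opM_swap[symmetric])
  also have "image_mset prod.swap (image_mset (\<lambda>q. (q, \<sigma> q)) (mset_set ?X))
      = image_mset (\<lambda>q. (q, inv \<sigma> q)) (image_mset \<sigma> (mset_set ?X))"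
    by (simp add: image_mset.compositionality o_def Perm_inv_app[OF s])
  also have "image_mset \<sigma> (mset_set ?X) = mset_set (\<sigma> ` ?X)"
    by (rule image_mset_mset_set) (rule permutes_inj_on[OF Perm_permutes[OF s]])
  also have "\<sigma> ` ?X = {1..p} - {m}"
  proof -
    have "\<sigma> ` ?X = \<sigma> ` {1..p} - \<sigma> ` {inv \<sigma> m}"
      by (rule image_set_diff) (rule permutes_inj[OF Perm_permutes[OF s]])
    then show ?thesis using permutes_image[OF Perm_permutes[OF s]] Perm_inv_app[OF s] by simp
  qed
  finally show ?thesis unfolding OP_def .
qed

lemma T1sum:
  assumes m: "m \<in> {1..p}" and l: "l \<in> {1..p}"
  shows "(\<Sum>\<sigma>\<in>Perm. sc (of_int (sign \<sigma>)) (OP (\<lambda>q. (q, \<sigma> q)) ({1..p} - {m}) (A (\<sigma> m, l) y)))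
       = (if l = m then DD y else 0)"
proof (cases "l = m")
  case True
  have "(\<Sum>\<sigma>\<in>Perm. sc (of_int (sign \<sigma>)) (OP (\<lambda>q. (q, \<sigma> q)) ({1..p} - {m}) (A (\<sigma> m, m) y))) = DD y"
    unfolding DD_def
  proof (rule sum.cong)
    fix \<sigma> assume s: "\<sigma> \<in> Perm"
    have "OP (\<lambda>q. (q, \<sigma> q)) {1..p} y = A (m, \<sigma> m) (OP (\<lambda>q. (q, \<sigma> q)) ({1..p} - {m}) y)"
      using m by (simp add: OP_remove)
    also have "\<dots> = OP (\<lambda>q. (q, \<sigma> q)) ({1..p} - {m}) (A (\<sigma> m, m) y)"
      unfolding OP_def by (simp add: A_opM A_swap)
    finally show "sc (of_int (sign \<sigma>)) (OP (\<lambda>q. (q, \<sigma> q)) ({1..p} - {m}) (A (\<sigma> m, m) y)) =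
         sc (of_int (sign \<sigma>)) (OP (\<lambda>q. (q, \<sigma> q)) {1..p} y)" by simp
  qed simp
  then show ?thesis using True by simp
next
  case False
  let ?G = "\<lambda>\<sigma>. OP (\<lambda>q. (q, \<sigma> q)) ({1..p} - {m}) (A (\<sigma> m, l) y)"
  have "(\<Sum>\<sigma>\<in>Perm. sc (of_int (sign \<sigma>)) (?G \<sigma>)) = 0"
  proof (rule sum_invol[OF m l])
    show "m \<noteq> l" using False by simp
    fix \<sigma> assume s: "\<sigma> \<in> Perm"
    let ?Z = "{1..p} - {m} - {l}"
    have lZ: "l \<in> {1..p} - {m}" using l False by simp
    have "?G (\<sigma> \<circ> Transposition.transpose m l)
        = A (l, \<sigma> m) (OP (\<lambda>q. (q, (\<sigma> \<circ> Transposition.transpose m l) q)) ?Z (A (\<sigma> l, l) y))"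
      using OP_remove[OF _ lZ] False by simp
    also have "OP (\<lambda>q. (q, (\<sigma> \<circ> Transposition.transpose m l) q)) ?Z = OP (\<lambda>q. (q, \<sigma> q)) ?Z"
      by (rule OP_cong) auto
    also have "A (l, \<sigma> m) (OP (\<lambda>q. (q, \<sigma> q)) ?Z (A (\<sigma> l, l) y))
       = OP (\<lambda>q. (q, \<sigma> q)) ?Z (A (l, \<sigma> m) (A (l, \<sigma> l) y))"
      unfolding OP_def by (simp add: A_opM A_swap)
    also have "\<dots> = OP (\<lambda>q. (q, \<sigma> q)) ?Z (A (l, \<sigma> l) (A (\<sigma> m, l) y))"
      by (simp add: A_comm A_swap)
    also have "\<dots> = A (l, \<sigma> l) (OP (\<lambda>q. (q, \<sigma> q)) ?Z (A (\<sigma> m, l) y))"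
      unfolding OP_def by (simp add: A_opM)
    also have "\<dots> = ?G \<sigma>"
      using OP_remove[OF _ lZ, of "\<lambda>q. (q, \<sigma> q)"] by simp
    finally show "?G (\<sigma> \<circ> Transposition.transpose m l) = ?G \<sigma>" .
  qed
  then show ?thesis using False by simp
qed


lemma inv_range: "\<sigma> \<in> Perm \<Longrightarrow> m \<in> {1..p} \<Longrightarrow> inv \<sigma> m \<in> {1..p}"
  using Perm_range[OF Perm_inv] by blast

lemma E_OP:
  assumes s: "\<sigma> \<in> Perm" and m: "m \<in> {1..p}" and l: "l \<in> {1..p}"
  shows "R (int m) (- int l) (OP (\<lambda>q. (q, \<sigma> q)) {1..p} y)
     = OP (\<lambda>q. (q, \<sigma> q)) {1..p} (R (int m) (- int l) y)
       + sc (of_nat m) (OP (\<lambda>q. (q, \<sigma> q)) ({1..p} - {m}) (A (\<sigma> m, l) y)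
          + OP (\<lambda>q. (q, \<sigma> q)) ({1..p} - {inv \<sigma> m}) (A (inv \<sigma> m, l) y))"
proof -
  let ?f = "\<lambda>q. (q, \<sigma> q)"
  let ?S = "{1..p}"
  define F where "F q x = sc (of_nat m) ((if q = m then A (\<sigma> q, l) x else 0) + (if \<sigma> q = m then A (q,l) x else 0))" for q x
  have L: "R (int m) (- int l) (OP ?f ?S y) = OP ?f ?S (R (int m) (- int l) y) + (\<Sum>q\<in>?S. OP ?f (?S - {q}) (F q y))"
  proof (rule Leib)
    fix q x assume q: "q \<in> ?S"
    then have "1 \<le> q" "1 \<le> \<sigma> q" using Perm_range[OF s q] by auto
    then show "R (int m) (- int l) (A (?f q) x) = A (?f q) (R (int m) (- int l) x) + F q x"
      unfolding F_def using l by (simp add: E_A)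
  next
    fix q N x show "F q (opM N x) = opM N (F q x)"
      unfolding F_def by (simp add: opM_sc opM_add A_opM)
  qed simp
  have e: "OP ?f (?S - {q}) (F q y) = sc (of_nat m) ((if q = m then OP ?f (?S - {m}) (A (\<sigma> m, l) y) else 0)
      + (if q = inv \<sigma> m then OP ?f (?S - {inv \<sigma> m}) (A (inv \<sigma> m, l) y) else 0))" for q
    unfolding F_def using Perm_eq_iff[OF s, of q m] by (simp add: OP_linear)
  have "(\<Sum>q\<in>?S. OP ?f (?S - {q}) (F q y)) = sc (of_nat m) (OP ?f (?S - {m}) (A (\<sigma> m, l) y)
          + OP ?f (?S - {inv \<sigma> m}) (A (inv \<sigma> m, l) y))"
    unfolding e vs.scale_sum_right[symmetric] sum.distrib using m inv_range[OF s m] by simp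
  then show ?thesis using L by simp
qed

lemma sc_comm: "sc a (sc b x) = sc b (sc a x)"
  by (metis mult.commute vs.scale_scale)

lemma sum_sc_pull: "(\<Sum>\<sigma>\<in>X. sc (f \<sigma>) (sc c (G \<sigma>))) = sc c (\<Sum>\<sigma>\<in>X. sc (f \<sigma>) (G \<sigma>))"
  unfolding vs.scale_sum_right by (rule sum.cong) (simp_all only: sc_comm)

lemma E_DD:
  assumes m: "m \<in> {1..p}" and l: "l \<in> {1..p}"
  shows "R (int m) (- int l) (DD y) = DD (R (int m) (- int l) y)
     + (if l = m then sc (2 * of_nat m) (DD y) else 0)"
proof -
  let ?E = "R (int m) (- int l)"
  let ?G1 = "\<lambda>\<sigma>. OP (\<lambda>q. (q, \<sigma> q)) ({1..p} - {m}) (A (\<sigma> m, l) y)"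
  have "?E (DD y) = (\<Sum>\<sigma>\<in>Perm. sc (of_int (sign \<sigma>)) (?E (OP (\<lambda>q. (q, \<sigma> q)) {1..p} y)))"
    unfolding DD_def by (simp add: R_sum R_sc)
  also have "\<dots> = (\<Sum>\<sigma>\<in>Perm. sc (of_int (sign \<sigma>)) (OP (\<lambda>q. (q, \<sigma> q)) {1..p} (?E y))
       + (sc (of_int (sign \<sigma>)) (sc (of_nat m) (?G1 \<sigma>))
       + sc (of_int (sign \<sigma>)) (sc (of_nat m) (?G1 (inv \<sigma>)))))"
  proof (rule sum.cong)
    fix \<sigma> assume s: "\<sigma> \<in> Perm"
    have i: "inv \<sigma> m = inv \<sigma> m" ..
    show "sc (of_int (sign \<sigma>)) (?E (OP (\<lambda>q. (q, \<sigma> q)) {1..p} y)) =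
      sc (of_int (sign \<sigma>)) (OP (\<lambda>q. (q, \<sigma> q)) {1..p} (?E y))
       + (sc (of_int (sign \<sigma>)) (sc (of_nat m) (?G1 \<sigma>))
       + sc (of_int (sign \<sigma>)) (sc (of_nat m) (?G1 (inv \<sigma>))))"
      unfolding E_OP[OF s m l] T2eq[OF s m] Perm_inv_inv[OF s]
      by (simp only: vs.scale_right_distrib)
  qed simp
  also have "\<dots> = DD (?E y) + (sc (of_nat m) (if l = m then DD y else 0)
      + sc (of_nat m) (if l = m then DD y else 0))"
    unfolding sum.distrib sum_sc_pull
    using T1sum[OF m l, of y] sum_inv[of "?G1"]
    by (simp add: DD_def)
  also have "\<dots> = DD (?E y) + (if l = m then sc (2 * of_nat m) (DD y) else 0)"
  proof (cases "l = m")
    case True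
    have "sc (of_nat m) (DD y) + sc (of_nat m) (DD y) = sc (2 * of_nat m) (DD y)"
      by (metis mult_2 vs.scale_left_distrib)
    then show ?thesis using True by (simp only: simp_thms if_True)
  qed simp
  finally show ?thesis .
qed


definition U where "U i = (DD ^^ i) w"

lemma U_0: "U 0 = w" and U_Suc: "U (Suc i) = DD (U i)"
  unfolding U_def by simp_all

lemma E_w: assumes "1 \<le> m" "1 \<le> l"
  shows "R (int m) (- int l) w = (if l = m then sc (of_nat m) w else 0)"
proof (cases "l = m")
  case True then show ?thesis using Rw_zero[of "int m"] assms by simp
next
  case False then show ?thesis using Rw_plus[of "int m" "- int l"] assms by simp
qed

lemma E_U: assumes m: "m \<in> {1..p}" and l: "l \<in> {1..p}"
  shows "R (int m) (- int l) (U i) = (if l = m then sc (of_nat m * (2 * of_nat i + 1)) (U i) else 0)"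
proof (induct i)
  case 0 then show ?case using E_w m l by (simp add: U_0)
next
  case (Suc i)
  show ?case
  proof (cases "l = m")
    case True
    have "R (int m) (- int l) (U (Suc i)) = DD (sc (of_nat m * (2 * of_nat i + 1)) (U i)) + sc (2 * of_nat m) (DD (U i))"
      unfolding U_Suc E_DD[OF m l] Suc using True by simp
    also have "\<dots> = sc (of_nat m * (2 * of_nat (Suc i) + 1)) (U (Suc i))"
      unfolding DD_sc U_Suc vs.scale_left_distrib[symmetric] by (simp add: algebra_simps)
    finally show ?thesis using True by simp
  next
    case False
    then show ?thesis unfolding U_Suc E_DD[OF m l] Suc by simp
  qed
qed

lemma X_Amm: assumes "1 \<le> m"
  shows "R (int m) (int m) (A (m,m) x) = A (m,m) (R (int m) (int m) x)
     + sc (4 * of_nat m) (R (int m) (- int m) x) + sc (2 * of_nat m * of_nat m * (r - 2)) x"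
proof -
  have e: "A (m,m) = R (- int m) (- int m)" using assms by (simp add: A_st)
  have c1: "Rr (int m) (- int m) x = R (int m) (- int m) x + sc ((r - 1) * of_nat m) x"
    unfolding Rr_def' cst_def using assms by simp
  have c2: "Rr (- int m) (int m) x = R (int m) (- int m) x + sc (- of_nat m) x"
    unfolding Rr_def' cst_def using assms symm1[of "- int m" "int m" x] by simp
  have "R (int m) (int m) (A (m,m) x) = A (m,m) (R (int m) (int m) x)
     + (sc (of_nat m) (Rr (int m) (- int m) x) + sc (of_nat m) (Rr (int m) (- int m) x)
      + sc (of_nat m) (Rr (- int m) (int m) x) + sc (of_nat m) (Rr (- int m) (int m) x))"
    unfolding e by (subst comm1) simp
  also have "\<dots> = A (m,m) (R (int m) (int m) x)
     + sc (4 * of_nat m) (R (int m) (- int m) x) + sc (2 * of_nat m * of_nat m * (r - 2)) x"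
    unfolding c1 c2 by (simp add: algebra_simps vs.scale_left_distrib[symmetric] )
  finally show ?thesis .
qed


lemma X_Amk: assumes "1 \<le> m" "1 \<le> k" "k \<noteq> m"
  shows "R (int m) (int m) (A (m,k) x) = A (m,k) (R (int m) (int m) x)
     + sc (2 * of_nat m) (R (int m) (- int k) x)"
proof -
  have e: "A (m,k) = R (- int m) (- int k)" using assms by (simp add: A_st)
  have c1: "Rr (int m) (- int k) x = R (int m) (- int k) x"
    unfolding Rr_def' cst_def using assms by simp
  have sy: "R (- int k) (int m) = R (int m) (- int k)" by (rule symm1') (use assms in simp)
  have c2: "Rr (- int k) (int m) x = R (int m) (- int k) x"
    unfolding Rr_def' cst_def sy using assms by simp
  have "R (int m) (int m) (A (m,k) x) = A (m,k) (R (int m) (int m) x)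
     + (sc (of_nat m) (Rr (int m) (- int k) x) + sc (of_nat m) (Rr (- int k) (int m) x))"
    unfolding e using assms by (subst comm1) simp
  also have "\<dots> = A (m,k) (R (int m) (int m) x) + sc (2 * of_nat m) (R (int m) (- int k) x)"
    unfolding c1 c2 by (metis mult_2 vs.scale_left_distrib)
  finally show ?thesis .
qed

lemma X_Ast: assumes "1 \<le> s" "1 \<le> t" "s \<noteq> m" "t \<noteq> m"
  shows "R (int m) (int m) (A (s,t) x) = A (s,t) (R (int m) (int m) x)"
proof -
  have e: "A (s,t) = R (- int s) (- int t)" using assms by (simp add: A_st)
  show ?thesis unfolding e using assms by (subst comm1) simp
qed

lemma E_Ast: assumes "1 \<le> s" "1 \<le> t" "s \<noteq> m" "t \<noteq> m" "1 \<le> l"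
  shows "R (int m) (- int l) (A (s,t) x) = A (s,t) (R (int m) (- int l) x)"
  using E_A[of s t l m x] assms by simp


lemma OP_comm:
  assumes "finite Z" "\<And>q x. q \<in> Z \<Longrightarrow> T (A (f q) x) = A (f q) (T x)"
  shows "T (OP f Z x) = OP f Z (T x)"
  unfolding OP_def by (rule opM_commute_gen) (use assms in auto)

lemma X_OP:
  assumes s: "\<sigma> \<in> Perm" and m: "m \<in> {1..p}"
    and hE: "\<And>l. l \<in> {1..p} \<Longrightarrow> l \<noteq> m \<Longrightarrow> R (int m) (- int l) y = 0"
    and hEm: "R (int m) (- int m) y = sc e y"
  shows "R (int m) (int m) (OP (\<lambda>q. (q, \<sigma> q)) {1..p} y) = OP (\<lambda>q. (q, \<sigma> q)) {1..p} (R (int m) (int m) y)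
     + (if \<sigma> m = m then sc (4 * of_nat m * e + 2 * of_nat m * of_nat m * (r - 2)) (OP (\<lambda>q. (q, \<sigma> q)) ({1..p} - {m}) y)
        else sc (2 * of_nat m * of_nat m) (OP (\<lambda>q. (q, \<sigma> q)) ({1..p} - {m} - {inv \<sigma> m}) (A (inv \<sigma> m, \<sigma> m) y)))"
proof -
  let ?f = "\<lambda>q. (q, \<sigma> q)"
  let ?X = "R (int m) (int m)"
  let ?S = "{1..p}"
  have m1: "1 \<le> m" using m by simp
  have rng: "1 \<le> q \<and> 1 \<le> \<sigma> q" if "q \<in> ?S" for q using Perm_range[OF s that] that by simp
  show ?thesis
  proof (cases "\<sigma> m = m")
    case True
    let ?Z = "?S - {m}"
    let ?z = "OP ?f ?Z y"
    have nz: "q \<noteq> m \<and> \<sigma> q \<noteq> m" if "q \<in> ?Z" for q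
      using that True Perm_eq_iff[OF s, of q m] Perm_eq_iff[OF s, of m m] by auto
    have Xz: "?X (OP ?f ?Z x) = OP ?f ?Z (?X x)" for x
    proof (rule OP_comm)
      fix q x assume q: "q \<in> ?Z"
      then have "1 \<le> q" "1 \<le> \<sigma> q" "q \<noteq> m" "\<sigma> q \<noteq> m" using rng[of q] nz[OF q] by auto
      then show "?X (A (?f q) x) = A (?f q) (?X x)" by (rule X_Ast)
    qed simp
    have Ez: "R (int m) (- int m) (OP ?f ?Z x) = OP ?f ?Z (R (int m) (- int m) x)" for x
    proof (rule OP_comm)
      fix q x assume q: "q \<in> ?Z"
      then have "1 \<le> q" "1 \<le> \<sigma> q" "q \<noteq> m" "\<sigma> q \<noteq> m" using rng[of q] nz[OF q] by auto
      then show "R (int m) (- int m) (A (?f q) x) = A (?f q) (R (int m) (- int m) x)" using m1 by (rule E_Ast)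
    qed simp
    have d: "OP ?f ?S x = A (m, m) (OP ?f ?Z x)" for x using m True by (simp add: OP_remove)
    have "?X (OP ?f ?S y) = A (m,m) (?X ?z) + sc (4 * of_nat m) (R (int m) (- int m) ?z)
       + sc (2 * of_nat m * of_nat m * (r - 2)) ?z"
      unfolding d by (rule X_Amm[OF m1])
    also have "\<dots> = OP ?f ?S (?X y) + sc (4 * of_nat m * e + 2 * of_nat m * of_nat m * (r - 2)) ?z"
      unfolding Xz Ez hEm d[symmetric] OP_linear
      by (simp add: vs.scale_left_distrib add.assoc)
    finally show ?thesis using True by simp
  next
    case False
    define k where "k = \<sigma> m"
    define j where "j = inv \<sigma> m"
    have km: "k \<noteq> m" "k \<in> ?S" using False m Perm_range[OF s m] unfolding k_def by auto
    have jm: "j \<noteq> m" "j \<in> ?S" "\<sigma> j = m"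
      using False m inv_range[OF s m] Perm_inv_app[OF s] Perm_eq_iff[OF s, of m m] unfolding j_def by auto
    let ?Z = "?S - {m} - {j}"
    let ?z = "OP ?f ?Z y"
    have nz: "q \<noteq> m \<and> \<sigma> q \<noteq> m" if "q \<in> ?Z" for q
      using that Perm_eq_iff[OF s, of q m] unfolding j_def by auto
    have Xz: "?X (OP ?f ?Z x) = OP ?f ?Z (?X x)" for x
    proof (rule OP_comm)
      fix q x assume q: "q \<in> ?Z"
      then have "1 \<le> q" "1 \<le> \<sigma> q" "q \<noteq> m" "\<sigma> q \<noteq> m" using rng[of q] nz[OF q] by auto
      then show "?X (A (?f q) x) = A (?f q) (?X x)" by (rule X_Ast)
    qed simp
    have Ez: "R (int m) (- int l) (OP ?f ?Z x) = OP ?f ?Z (R (int m) (- int l) x)" if l1: "1 \<le> l" for x l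
    proof (rule OP_comm)
      fix q x assume q: "q \<in> ?Z"
      then have "1 \<le> q" "1 \<le> \<sigma> q" "q \<noteq> m" "\<sigma> q \<noteq> m" using rng[of q] nz[OF q] by auto
      then show "R (int m) (- int l) (A (?f q) x) = A (?f q) (R (int m) (- int l) x)" using l1 by (rule E_Ast)
    qed simp
    have jS: "j \<in> ?S - {m}" using jm by simp
    have d: "OP ?f ?S x = A (m, k) (A (m, j) (OP ?f ?Z x))" for x
      using OP_remove[OF _ m, of ?f x] OP_remove[OF _ jS, of ?f x] jm A_swap[of j m] unfolding k_def by simp
    have k1: "1 \<le> k" "1 \<le> j" using km jm by auto
    have eq1: "?X (OP ?f ?S y) = A (m,k) (?X (A (m,j) ?z)) + sc (2 * of_nat m) (R (int m) (- int k) (A (j,m) ?z))"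
      unfolding d A_swap[of m j] by (rule X_Amk[OF m1 k1(1) km(1)])
    have eq2: "?X (A (m,j) ?z) = A (m,j) (?X ?z)"
      using X_Amk[OF m1 k1(2) jm(1), of ?z] Ez[OF k1(2)] hE[OF jm(2) jm(1)] by (simp add: OP_linear)
    have eq3: "R (int m) (- int k) (A (j,m) ?z) = sc (of_nat m) (A (j,k) ?z)"
      using E_A[of j m k m ?z] k1 m1 Ez[OF k1(1)] hE[OF km(2) km(1)] jm(1) by (simp add: OP_linear)
    have eq4: "A (m,k) (A (m,j) (?X ?z)) = OP ?f ?S (?X y)" unfolding Xz d ..
    have eq5: "A (j,k) ?z = OP ?f ?Z (A (j,k) y)" unfolding OP_def by (simp add: A_opM)
    have "?X (OP ?f ?S y) = OP ?f ?S (?X y) + sc (2 * of_nat m * of_nat m) (OP ?f ?Z (A (j, k) y))"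
      unfolding eq1 eq2 eq3 eq4 eq5 by simp
    then show ?thesis using False unfolding j_def k_def by simp
  qed
qed


definition beta where
  "beta m y = (\<Sum>\<sigma>\<in>Perm \<inter> {\<sigma>. \<sigma> m = m}. sc (of_int (sign \<sigma>)) (OP (\<lambda>q. (q, \<sigma> q)) ({1..p} - {m}) y))"

lemma Tsum:
  assumes m: "m \<in> {1..p}"
  shows "(\<Sum>\<sigma>\<in>Perm \<inter> - {\<sigma>. \<sigma> m = m}. sc (of_int (sign \<sigma>))
            (OP (\<lambda>q. (q, \<sigma> q)) ({1..p} - {m} - {inv \<sigma> m}) (A (inv \<sigma> m, \<sigma> m) y)))
       = - sc (of_nat (p - 1)) (beta m y)"
proof -
  let ?J = "{1..p} - {m}"
  let ?Fix = "Perm \<inter> {\<sigma>. \<sigma> m = m}"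
  let ?h = "\<lambda>z. case z of (\<tau>, j) \<Rightarrow> - sc (of_int (sign \<tau>)) (OP (\<lambda>q. (q, \<tau> q)) ({1..p} - {m}) y)"
  have trP: "Transposition.transpose m j permutes {1..p}" if "j \<in> ?J" for j
    using that m by (simp add: permutes_swap_id)
  have cP: "\<tau> \<circ> Transposition.transpose m j \<in> Perm" if "\<tau> \<in> Perm" "j \<in> ?J" for \<tau> j
    using that trP[OF that(2)] unfolding Perm_def by (simp add: permutes_compose)
  have sgn: "sign (\<tau> \<circ> Transposition.transpose m j) = - sign \<tau>" if "\<tau> \<in> Perm" "j \<in> ?J" for \<tau> j
  proof -
    have "permutation (Transposition.transpose m j)" using trP[OF that(2)] permutation_permutes by blast
    then show ?thesis using sign_compose[OF Perm_permutation[OF that(1)]] that(2) by (simp add: sign_swap_id)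
  qed
  have "(\<Sum>\<sigma>\<in>Perm \<inter> - {\<sigma>. \<sigma> m = m}. sc (of_int (sign \<sigma>))
            (OP (\<lambda>q. (q, \<sigma> q)) ({1..p} - {m} - {inv \<sigma> m}) (A (inv \<sigma> m, \<sigma> m) y)))
        = (\<Sum>z\<in>?Fix \<times> ?J. ?h z)"
  proof (rule sum.reindex_bij_witness[where j="\<lambda>\<sigma>. (\<sigma> \<circ> Transposition.transpose m (inv \<sigma> m), inv \<sigma> m)"
        and i="\<lambda>(\<tau>, j). \<tau> \<circ> Transposition.transpose m j"])
    fix \<sigma> assume "\<sigma> \<in> Perm \<inter> - {\<sigma>. \<sigma> m = m}"
    then have s: "\<sigma> \<in> Perm" and nm: "\<sigma> m \<noteq> m" by auto
    have jJ: "inv \<sigma> m \<in> ?J" using inv_range[OF s m] nm Perm_inv_app[OF s, of m] by auto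
    show "(case (\<sigma> \<circ> Transposition.transpose m (inv \<sigma> m), inv \<sigma> m) of (\<tau>, j) \<Rightarrow> \<tau> \<circ> Transposition.transpose m j) = \<sigma>"
      by (simp add: o_assoc[symmetric])
    show "(\<sigma> \<circ> Transposition.transpose m (inv \<sigma> m), inv \<sigma> m) \<in> ?Fix \<times> ?J"
      using cP[OF s jJ] jJ Perm_inv_app[OF s] by simp
    let ?j = "inv \<sigma> m"
    let ?\<tau> = "\<sigma> \<circ> Transposition.transpose m ?j"
    have jS: "?j \<in> {1..p} - {m}" using jJ by simp
    have "OP (\<lambda>q. (q, ?\<tau> q)) ({1..p} - {m}) y = A (?j, ?\<tau> ?j) (OP (\<lambda>q. (q, ?\<tau> q)) ({1..p} - {m} - {?j}) y)"
      by (rule OP_remove[OF _ jS]) simp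
    also have "OP (\<lambda>q. (q, ?\<tau> q)) ({1..p} - {m} - {?j}) = OP (\<lambda>q. (q, \<sigma> q)) ({1..p} - {m} - {?j})"
      by (rule OP_cong) auto
    also have "?\<tau> ?j = \<sigma> m" by simp
    finally have "OP (\<lambda>q. (q, ?\<tau> q)) ({1..p} - {m}) y = OP (\<lambda>q. (q, \<sigma> q)) ({1..p} - {m} - {?j}) (A (?j, \<sigma> m) y)"
      unfolding OP_def by (simp add: A_opM)
    then show "?h (?\<tau>, ?j) = sc (of_int (sign \<sigma>)) (OP (\<lambda>q. (q, \<sigma> q)) ({1..p} - {m} - {?j}) (A (?j, \<sigma> m) y))"
      using sgn[OF s jJ] by simp
  next
    fix z assume z: "z \<in> ?Fix \<times> ?J"
    obtain \<tau> j where zz: "z = (\<tau>, j)" by (cases z)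
    have t: "\<tau> \<in> Perm" "\<tau> m = m" and jJ: "j \<in> ?J" using z unfolding zz by auto
    let ?\<sigma> = "\<tau> \<circ> Transposition.transpose m j"
    have sP: "?\<sigma> \<in> Perm" by (rule cP[OF t(1) jJ])
    have "?\<sigma> j = m" using t by simp
    then have ij: "inv ?\<sigma> m = j" using Perm_eq_iff[OF sP, of j m] by simp
    show "(\<lambda>\<sigma>. (\<sigma> \<circ> Transposition.transpose m (inv \<sigma> m), inv \<sigma> m)) ((\<lambda>(\<tau>, j). \<tau> \<circ> Transposition.transpose m j) z) = z"
      unfolding zz using ij by (simp add: o_assoc[symmetric])
    have "?\<sigma> m = \<tau> j" using jJ by simp
    moreover have "\<tau> j \<noteq> m"
    proof
      assume "\<tau> j = m"
      then have "j = inv \<tau> m" using Perm_eq_iff[OF t(1)] by blast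
      moreover have "m = inv \<tau> m" using Perm_eq_iff[OF t(1), of m m] t(2) by blast
      ultimately show False using jJ by simp
    qed
    ultimately show "(\<lambda>(\<tau>, j). \<tau> \<circ> Transposition.transpose m j) z \<in> Perm \<inter> - {\<sigma>. \<sigma> m = m}"
      unfolding zz using sP by simp
  qed
  also have "\<dots> = (\<Sum>\<tau>\<in>?Fix. \<Sum>j\<in>?J. - sc (of_int (sign \<tau>)) (OP (\<lambda>q. (q, \<tau> q)) ({1..p} - {m}) y))"
    by (simp add: sum.cartesian_product)
  also have "\<dots> = (\<Sum>\<tau>\<in>?Fix. - sc (of_nat (p - 1)) (sc (of_int (sign \<tau>)) (OP (\<lambda>q. (q, \<tau> q)) ({1..p} - {m}) y)))"
  proof (rule sum.cong)
    fix \<tau> show "(\<Sum>j\<in>?J. - sc (of_int (sign \<tau>)) (OP (\<lambda>q. (q, \<tau> q)) ({1..p} - {m}) y))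
       = - sc (of_nat (p - 1)) (sc (of_int (sign \<tau>)) (OP (\<lambda>q. (q, \<tau> q)) ({1..p} - {m}) y))"
      unfolding vs.sum_constant_scale using m by simp
  qed simp
  also have "\<dots> = - sc (of_nat (p - 1)) (beta m y)"
    unfolding beta_def by (simp add: sum_negf vs.scale_sum_right)
  finally show ?thesis .
qed

lemma DD_sum: "DD (sum f X) = (\<Sum>x\<in>X. DD (f x))"
  by (induct X rule: infinite_finite_induct) (simp_all add: DD_add)

lemma beta_DD: "DD (beta m y) = beta m (DD y)"
  unfolding beta_def DD_sum DD_sc OP_def DD_opM ..

lemma beta_sc: "beta m (sc c y) = sc c (beta m y)"
  unfolding beta_def vs.scale_sum_right by (rule sum.cong[OF refl]) (metis OP_linear(2) sc_comm)

lemma X_DD: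
  assumes m: "m \<in> {1..p}"
    and hE: "\<And>l. l \<in> {1..p} \<Longrightarrow> l \<noteq> m \<Longrightarrow> R (int m) (- int l) y = 0"
    and hEm: "R (int m) (- int m) y = sc e y"
  shows "R (int m) (int m) (DD y) = DD (R (int m) (int m) y)
     + sc (4 * of_nat m * e + 2 * of_nat m * of_nat m * (r - 2) - 2 * of_nat m * of_nat m * of_nat (p - 1)) (beta m y)"
proof -
  let ?X = "R (int m) (int m)"
  let ?c1 = "4 * of_nat m * e + 2 * of_nat m * of_nat m * (r - 2)"
  let ?c2 = "2 * of_nat m * of_nat m :: complex"
  let ?G1 = "\<lambda>\<sigma>. OP (\<lambda>q. (q, \<sigma> q)) ({1..p} - {m}) y"
  let ?G2 = "\<lambda>\<sigma>. OP (\<lambda>q. (q, \<sigma> q)) ({1..p} - {m} - {inv \<sigma> m}) (A (inv \<sigma> m, \<sigma> m) y)"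
  have "?X (DD y) = (\<Sum>\<sigma>\<in>Perm. sc (of_int (sign \<sigma>)) (?X (OP (\<lambda>q. (q, \<sigma> q)) {1..p} y)))"
    unfolding DD_def by (simp add: R_sum R_sc)
  also have "\<dots> = (\<Sum>\<sigma>\<in>Perm. sc (of_int (sign \<sigma>)) (OP (\<lambda>q. (q, \<sigma> q)) {1..p} (?X y))
      + (if \<sigma> m = m then sc ?c1 (sc (of_int (sign \<sigma>)) (?G1 \<sigma>)) else sc ?c2 (sc (of_int (sign \<sigma>)) (?G2 \<sigma>))))"
  proof (rule sum.cong)
    fix \<sigma> assume s: "\<sigma> \<in> Perm"
    show "sc (of_int (sign \<sigma>)) (?X (OP (\<lambda>q. (q, \<sigma> q)) {1..p} y)) =
      sc (of_int (sign \<sigma>)) (OP (\<lambda>q. (q, \<sigma> q)) {1..p} (?X y))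
      + (if \<sigma> m = m then sc ?c1 (sc (of_int (sign \<sigma>)) (?G1 \<sigma>)) else sc ?c2 (sc (of_int (sign \<sigma>)) (?G2 \<sigma>)))"
      using X_OP[OF s m hE hEm]
      by (cases "\<sigma> m = m") (simp_all del: vs.scale_scale add: vs.scale_right_distrib sc_comm[of "of_int (sign \<sigma>)"])
  qed simp
  also have "\<dots> = DD (?X y) + (sc ?c1 (beta m y) + sc ?c2 (- sc (of_nat (p - 1)) (beta m y)))"
    unfolding sum.distrib sum.If_cases[OF finite_Perm] Tsum[OF m, symmetric]
    unfolding beta_def DD_def vs.scale_sum_right ..
  also have "\<dots> = DD (?X y) + sc (?c1 - ?c2 * of_nat (p - 1)) (beta m y)"
    by (simp add: vs.scale_left_diff_distrib)
  finally show ?thesis by (simp add: algebra_simps)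
qed

lemma X_w: "R (int m) (int m) w = 0" if "1 \<le> m"
  using Rw_plus[of "int m" "int m"] that by simp

lemma XU:
  assumes m: "m \<in> {1..p}"
  shows "R (int m) (int m) (U (Suc i)) =
     sc (2 * of_nat m * of_nat m * of_nat (Suc i) * (r + 2 * of_nat (Suc i) - of_nat p - 1)) (beta m (U i))"
proof -
  have hE: "\<And>l. l \<in> {1..p} \<Longrightarrow> l \<noteq> m \<Longrightarrow> R (int m) (- int l) (U i) = 0" for i
    using E_U[OF m] by simp
  have hEm: "R (int m) (- int m) (U i) = sc (of_nat m * (2 * of_nat i + 1)) (U i)" for i
    using E_U[OF m m] by simp
  show ?thesis
proof (induct i)
  case 0
  have "R (int m) (int m) (U (Suc 0)) = DD (R (int m) (int m) (U 0))
     + sc (4 * of_nat m * (of_nat m * (2 * of_nat 0 + 1)) + 2 * of_nat m * of_nat m * (r - 2) - 2 * of_nat m * of_nat m * of_nat (p - 1)) (beta m (U 0))"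
    unfolding U_Suc by (rule X_DD[OF m hE hEm])
  also have "R (int m) (int m) (U 0) = 0" unfolding U_0 using m by (simp add: X_w)
  finally show ?case using p1 by (simp add: algebra_simps of_nat_diff)
next
  case (Suc i)
  have "R (int m) (int m) (U (Suc (Suc i))) = DD (R (int m) (int m) (U (Suc i)))
     + sc (4 * of_nat m * (of_nat m * (2 * of_nat (Suc i) + 1)) + 2 * of_nat m * of_nat m * (r - 2) - 2 * of_nat m * of_nat m * of_nat (p - 1)) (beta m (U (Suc i)))"
    unfolding U_Suc[of "Suc i"] by (rule X_DD[OF m hE hEm])
  also have "DD (R (int m) (int m) (U (Suc i))) = sc (2 * of_nat m * of_nat m * of_nat (Suc i) * (r + 2 * of_nat (Suc i) - of_nat p - 1)) (beta m (U (Suc i)))"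
    using Suc by (simp add: DD_sc beta_DD U_Suc)
  finally show ?case unfolding vs.scale_left_distrib[symmetric] using p1
    by (simp add: algebra_simps of_nat_diff)
qed
qed


lemma E_X: assumes "1 \<le> a" "1 \<le> b" "a \<noteq> b"
  shows "R (int a) (- int b) (R (int b) (int b) x) = R (int b) (int b) (R (int a) (- int b) x)
     + sc (- 2 * of_nat b) (R (int a) (int b) x)"
proof -
  have c: "Rr (int a) (int b) x = R (int a) (int b) x" unfolding Rr_def' cst_def using assms by simp
  have "R (int a) (- int b) (R (int b) (int b) x) = R (int b) (int b) (R (int a) (- int b) x)
     + (sc (- of_nat b) (Rr (int a) (int b) x) + sc (- of_nat b) (Rr (int a) (int b) x))"
    using assms by (subst comm1) simp
  also have "\<dots> = R (int b) (int b) (R (int a) (- int b) x) + sc (- of_nat b + - of_nat b) (R (int a) (int b) x)"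
    unfolding c vs.scale_left_distrib by (rule refl)
  also have "(- of_nat b + - of_nat b :: complex) = - 2 * of_nat b" by simp
  finally show ?thesis .
qed

definition nice where
  "nice a b \<longleftrightarrow> (\<forall>s t x. s \<in> {1..p} \<longrightarrow> t \<in> {1..p} \<longrightarrow> R a b (A (s,t) x) = A (s,t) (R a b x)) \<and> R a b w = 0"

definition blk where "blk N \<longleftrightarrow> (\<forall>a\<in>#N. fst a \<in> {1..p} \<and> snd a \<in> {1..p})"

lemma blk_OP: "blk (image_mset (\<lambda>q. (q, \<sigma> q)) (mset_set {1..p}))" if "\<sigma> \<in> Perm"
  unfolding blk_def using Perm_range[OF that] by auto

lemma nice_opM: "nice a b \<Longrightarrow> blk N \<Longrightarrow> R a b (opM N x) = opM N (R a b x)"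
  unfolding nice_def blk_def by (rule opM_commute_gen) (metis prod.collapse)

lemma nice_DD: assumes "nice a b" shows "R a b (DD x) = DD (R a b x)"
proof -
  have "R a b (DD x) = (\<Sum>\<sigma>\<in>Perm. sc (of_int (sign \<sigma>)) (R a b (OP (\<lambda>q. (q, \<sigma> q)) {1..p} x)))"
    unfolding DD_def by (simp add: R_sum R_sc)
  also have "\<dots> = DD (R a b x)" unfolding DD_def OP_def
    by (rule sum.cong[OF refl]) (simp add: nice_opM[OF assms blk_OP])
  finally show ?thesis .
qed

lemma nice_U: assumes "nice a b" shows "R a b (U i) = 0"
proof (induct i)
  case 0 then show ?case using assms unfolding nice_def U_0 by simp
next
  case (Suc i) then show ?case unfolding U_Suc nice_DD[OF assms] by simp
qed

definition good where
  "good m n \<longleftrightarrow> (\<forall>s\<in>{1..p}. \<forall>t\<in>{1..p}. \<exists>a1 b1 a2 b2 c1 c2. nice a1 b1 \<and> nice a2 b2 \<and>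
      (\<forall>x. R m n (A (s,t) x) = A (s,t) (R m n x) + sc c1 (R a1 b1 x) + sc c2 (R a2 b2 x)))"

lemma good_opM:
  assumes g: "good m n" and N: "blk N" and y: "R m n y = 0"
    and ny: "\<And>a b. nice a b \<Longrightarrow> R a b y = 0"
  shows "R m n (opM N y) = 0"
  using N
proof (induct N)
  case empty then show ?case using y by simp
next
  case (add a N)
  obtain s t where a: "a = (s,t)" by (cases a)
  have st: "s \<in> {1..p}" "t \<in> {1..p}" and bN: "blk N" using add(2) unfolding blk_def a by auto
  obtain a1 b1 a2 b2 c1 c2 where n1: "nice a1 b1" and n2: "nice a2 b2"
    and e: "\<And>x. R m n (A (s,t) x) = A (s,t) (R m n x) + sc c1 (R a1 b1 x) + sc c2 (R a2 b2 x)"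
    using g st unfolding good_def by blast
  show ?case unfolding a opM_add_mset e add(1)[OF bN] nice_opM[OF n1 bN] nice_opM[OF n2 bN]
    ny[OF n1] ny[OF n2] by simp
qed

lemma good_U:
  assumes g: "good m n" and w0: "R m n w = 0"
  shows "R m n (U i) = 0"
proof (induct i)
  case 0 then show ?case using w0 by (simp add: U_0)
next
  case (Suc i)
  have "R m n (U (Suc i)) = (\<Sum>\<sigma>\<in>Perm. sc (of_int (sign \<sigma>)) (R m n (OP (\<lambda>q. (q, \<sigma> q)) {1..p} (U i))))"
    unfolding U_Suc DD_def by (simp add: R_sum R_sc)
  also have "\<dots> = 0"
    by (rule sum.neutral) (auto simp: OP_def good_opM[OF g blk_OP Suc] nice_U)
  finally show ?case .
qed

lemma nice_dummy: "nice (-1) 0"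
proof -
  have "R (-1) 0 (A (s,t) x) = A (s,t) (R (-1) 0 x)" if "s \<in> {1..p}" "t \<in> {1..p}" for s t x
    using that by (simp add: A_st, subst comm1, simp)
  moreover have "R (-1) 0 w = 0" by (rule Rw_plus) simp_all
  ultimately show ?thesis unfolding nice_def by blast
qed

lemma nice_t0: assumes "1 \<le> t" shows "nice (- int t) 0"
proof -
  have "R (- int t) 0 (A (s,u) x) = A (s,u) (R (- int t) 0 x)" if "s \<in> {1..p}" "u \<in> {1..p}" for s u x
    using that assms by (simp add: A_st, subst comm1, simp)
  moreover have "R (- int t) 0 w = 0" by (rule Rw_plus) (use assms in simp_all)
  ultimately show ?thesis unfolding nice_def by blast
qed

lemma nice_big: assumes "p < m" "t \<in> {1..p}" shows "nice (int m) (- int t)"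
proof -
  have "R (int m) (- int t) (A (s,u) x) = A (s,u) (R (int m) (- int t) x)" if "s \<in> {1..p}" "u \<in> {1..p}" for s u x
    using E_A[of s u t m x] that assms by simp
  moreover have "R (int m) (- int t) w = 0" by (rule Rw_plus) (use assms in simp_all)
  ultimately show ?thesis unfolding nice_def by blast
qed


lemma good_big: assumes "p < a" shows "good (int a) n"
  unfolding good_def
proof (intro ballI)
  fix s t assume s: "s \<in> {1..p}" and t: "t \<in> {1..p}"
  have e: "A (s,t) = R (- int s) (- int t)" using s t by (simp add: A_st)
  have c1: "Rr (int a) (- int t) x = R (int a) (- int t) x" for x unfolding Rr_def' cst_def using t assms by simp
  have c2: "Rr (int a) (- int s) x = R (int a) (- int s) x" for x unfolding Rr_def' cst_def using s assms by simp
  have "R (int a) n (A (s,t) x) = A (s,t) (R (int a) n x) + sc (dlt (n + - int s = 0) n) (R (int a) (- int t) x)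
      + sc (dlt (n + - int t = 0) n) (R (int a) (- int s) x)" for x
    using comm1[of "int a" n "- int s" "- int t" x] s t assms unfolding e c1 c2 by (simp add: add.assoc)
  then show "\<exists>a1 b1 a2 b2 c1 c2. nice a1 b1 \<and> nice a2 b2 \<and>
      (\<forall>x. R (int a) n (A (s,t) x) = A (s,t) (R (int a) n x) + sc c1 (R a1 b1 x) + sc c2 (R a2 b2 x))"
    using nice_big[OF assms t] nice_big[OF assms s] by blast
qed

lemma good_0: assumes "1 \<le> a" shows "good (int a) 0"
  unfolding good_def
proof (intro ballI)
  fix s t assume s: "s \<in> {1..p}" and t: "t \<in> {1..p}"
  have e: "A (s,t) = R (- int s) (- int t)" using s t by (simp add: A_st)
  have c1: "Rr (- int t) 0 x = R (- int t) 0 x" for x unfolding Rr_def' cst_def using t by simp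
  have c2: "Rr (- int s) 0 x = R (- int s) 0 x" for x unfolding Rr_def' cst_def using s by simp
  have "R (int a) 0 (A (s,t) x) = A (s,t) (R (int a) 0 x) + sc (dlt (int a + - int s = 0) (int a)) (R (- int t) 0 x)
      + sc (dlt (int a + - int t = 0) (int a)) (R (- int s) 0 x)" for x
    using comm1[of "int a" 0 "- int s" "- int t" x] s t unfolding e c1 c2 by (simp add: add.assoc)
  then show "\<exists>a1 b1 a2 b2 c1 c2. nice a1 b1 \<and> nice a2 b2 \<and>
      (\<forall>x. R (int a) 0 (A (s,t) x) = A (s,t) (R (int a) 0 x) + sc c1 (R a1 b1 x) + sc c2 (R a2 b2 x))"
    using nice_t0[of t] nice_t0[of s] s t by (metis atLeastAtMost_iff)
qed


lemma in_sum_list_mset_iff: "x \<in># sum_list Ms \<longleftrightarrow> (\<exists>M\<in>set Ms. x \<in># M)"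
  by (induct Ms) auto

definition PM :: "(nat \<Rightarrow> nat) \<Rightarrow> (nat \<times> nat) multiset" where
  "PM \<sigma> = image_mset (\<lambda>q. (q, \<sigma> q)) (mset_set {1..p})"
definition Tup :: "nat \<Rightarrow> (nat \<Rightarrow> nat) list set" where "Tup i = {ls. length ls = i \<and> set ls \<subseteq> Perm}"
definition sg :: "(nat \<Rightarrow> nat) list \<Rightarrow> int" where "sg ls = prod_list (map sign ls)"
definition PMs :: "(nat \<Rightarrow> nat) list \<Rightarrow> (nat \<times> nat) multiset" where "PMs ls = sum_list (map PM ls)"

lemma finite_Tup: "finite (Tup i)"
proof -
  have "finite {xs. set xs \<subseteq> Perm \<and> length xs = i}" by (rule finite_lists_length_eq) simp
  then show ?thesis unfolding Tup_def by (simp add: conj_commute)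
qed

lemma Tup_0: "Tup 0 = {[]}" unfolding Tup_def by auto

lemma Tup_Suc: "Tup (Suc i) = (\<lambda>(\<sigma>, ls). \<sigma> # ls) ` (Perm \<times> Tup i)"
proof
  show "Tup (Suc i) \<subseteq> (\<lambda>(\<sigma>, ls). \<sigma> # ls) ` (Perm \<times> Tup i)"
  proof
    fix xs assume "xs \<in> Tup (Suc i)"
    then obtain \<sigma> ls where "xs = \<sigma> # ls" "length ls = i" "\<sigma> \<in> Perm" "set ls \<subseteq> Perm"
      unfolding Tup_def by (cases xs) auto
    then show "xs \<in> (\<lambda>(\<sigma>, ls). \<sigma> # ls) ` (Perm \<times> Tup i)" unfolding Tup_def by force
  qed
  show "(\<lambda>(\<sigma>, ls). \<sigma> # ls) ` (Perm \<times> Tup i) \<subseteq> Tup (Suc i)" unfolding Tup_def by auto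
qed

lemma inj_Cons: "inj_on (\<lambda>(\<sigma>, ls). \<sigma> # ls) X" by (rule inj_onI) auto

lemma U_expand: "U i = (\<Sum>ls\<in>Tup i. sc (of_int (sg ls)) (opM (PMs ls) w))"
proof (induct i)
  case 0 then show ?case unfolding Tup_0 by (simp add: U_0 sg_def PMs_def)
next
  case (Suc i)
  have "U (Suc i) = (\<Sum>\<sigma>\<in>Perm. \<Sum>ls\<in>Tup i. sc (of_int (sign \<sigma>)) (sc (of_int (sg ls)) (opM (PM \<sigma>) (opM (PMs ls) w))))"
    unfolding U_Suc DD_def Suc OP_def PM_def by (simp add: opM_sum opM_sc vs.scale_sum_right)
  also have "\<dots> = (\<Sum>z\<in>Perm \<times> Tup i. (\<lambda>ls. sc (of_int (sg ls)) (opM (PMs ls) w)) ((\<lambda>(\<sigma>, ls). \<sigma> # ls) z))"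
    unfolding sum.cartesian_product by (rule sum.cong[OF refl]) (auto simp: sg_def PMs_def opM_union)
  also have "\<dots> = (\<Sum>ls\<in>Tup (Suc i). sc (of_int (sg ls)) (opM (PMs ls) w))"
    unfolding Tup_Suc by (rule sum.reindex[OF inj_Cons, symmetric, unfolded o_def])
  finally show ?case .
qed

lemma PMs_blk: "ls \<in> Tup i \<Longrightarrow> a \<in># PMs ls \<Longrightarrow> fst a \<in> {1..p} \<and> snd a \<in> {1..p}"
proof -
  assume ls: "ls \<in> Tup i" and a: "a \<in># PMs ls"
  then obtain \<sigma> where s: "\<sigma> \<in> set ls" and a': "a \<in># PM \<sigma>"
    unfolding PMs_def by (auto simp: in_sum_list_mset_iff)
  then have "\<sigma> \<in> Perm" using ls unfolding Tup_def by auto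
  then show ?thesis using a' Perm_range unfolding PM_def by auto
qed

definition idl where "idl i = replicate i (id :: nat \<Rightarrow> nat)"

lemma idl_Tup: "idl i \<in> Tup i"
  unfolding idl_def Tup_def Perm_def by (auto simp: permutes_id)

lemma kn_diag: "kn (q, q) = (1, 1, - int q, - int q)" unfolding kn_def by simp

lemma only_idl:
  assumes ls: "ls \<in> Tup i" and eq: "image_mset kn (PMs ls) = image_mset kn (PMs (idl i))"
  shows "ls = idl i"
proof -
  have diag: "\<And>k. k \<in># image_mset kn (PMs (idl i)) \<Longrightarrow> (\<exists>q. k = (1, 1, - int q, - int q))"
  proof -
    fix k assume "k \<in># image_mset kn (PMs (idl i))"
    then obtain a where "a \<in># PMs (idl i)" "k = kn a" by auto
    moreover from this(1) have "fst a = snd a"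
      unfolding PMs_def idl_def PM_def by (auto simp: in_sum_list_mset_iff split: if_splits)
    ultimately show "\<exists>q. k = (1, 1, - int q, - int q)" unfolding kn_def by (metis max.idem min.idem)
  qed
  have fixpt: "\<sigma> q = q" if s: "\<sigma> \<in> set ls" and q: "q \<in> {1..p}" for \<sigma> q
  proof -
    have "(q, \<sigma> q) \<in># PM \<sigma>" unfolding PM_def using q by simp
    then have "(q, \<sigma> q) \<in># PMs ls" unfolding PMs_def using s by (auto simp: in_sum_list_mset_iff)
    then have "kn (q, \<sigma> q) \<in># image_mset kn (PMs (idl i))" unfolding eq[symmetric] by simp
    then obtain q' where "kn (q, \<sigma> q) = (1, 1, - int q', - int q')" using diag by blast
    then have "max q (\<sigma> q) = min q (\<sigma> q)" unfolding kn_def by simp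
    then show ?thesis by (cases "q \<le> \<sigma> q") (simp_all add: max_def min_def)
  qed
  have "\<sigma> = id" if s: "\<sigma> \<in> set ls" for \<sigma>
  proof
    fix q
    have sp: "\<sigma> permutes {1..p}" using s ls unfolding Tup_def Perm_def by auto
    show "\<sigma> q = id q"
    proof (cases "q \<in> {1..p}")
      case True then show ?thesis using fixpt[OF s] by simp
    next
      case False then show ?thesis using sp unfolding permutes_def by simp
    qed
  qed
  then have "replicate (length ls) id = ls" by (intro replicate_length_same) blast
  then show ?thesis using ls unfolding idl_def Tup_def by simp
qed

lemma U_nz: "U i \<noteq> 0"
proof
  assume U0: "U i = 0"
  let ?Mof = "\<lambda>ls. image_mset kn (PMs ls)"
  let ?c = "\<lambda>M. (\<Sum>ls\<in>{x \<in> Tup i. ?Mof x = M}. (of_int (sg ls) :: complex))"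
  have blk: "\<And>ls a. ls \<in> Tup i \<Longrightarrow> a \<in># PMs ls \<Longrightarrow> 1 \<le> fst a \<and> 1 \<le> snd a"
    using PMs_blk by fastforce
  have "U i = (\<Sum>ls\<in>Tup i. sc (of_int (sg ls)) (mono (?Mof ls)))"
    unfolding U_expand by (rule sum.cong[OF refl]) (simp add: mono_opM blk)
  also have "\<dots> = (\<Sum>M\<in>?Mof ` Tup i. \<Sum>ls\<in>{x \<in> Tup i. ?Mof x = M}. sc (of_int (sg ls)) (mono (?Mof ls)))"
    by (rule sum.image_gen[OF finite_Tup])
  also have "\<dots> = (\<Sum>M\<in>?Mof ` Tup i. sc (?c M) (mono M))"
    unfolding vs.scale_sum_left by (rule sum.cong[OF refl]) (rule sum.cong, auto)
  finally have z: "(\<Sum>M\<in>?Mof ` Tup i. sc (?c M) (mono M)) = 0" using U0 by simp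
  have "?c (?Mof (idl i)) = 0"
  proof (rule indep_ax[OF _ _ z])
    show "finite (?Mof ` Tup i)" using finite_Tup by simp
    show "?Mof (idl i) \<in> ?Mof ` Tup i" using idl_Tup by simp
    fix M assume "M \<in> ?Mof ` Tup i"
    then obtain ls where ls: "ls \<in> Tup i" "M = ?Mof ls" by (rule imageE)
    show "set_mset M \<subseteq> Bminus d"
    proof
      fix k assume "k \<in># M"
      then obtain a where "a \<in># PMs ls" "k = kn a" using ls by auto
      then show "k \<in> Bminus d" using blk[OF ls(1)] kn_Bminus by blast
    qed
  qed
  moreover have "{x \<in> Tup i. ?Mof x = ?Mof (idl i)} = {idl i}"
    using only_idl idl_Tup by blast
  moreover have "sg (idl i) = 1" unfolding sg_def idl_def by (induct i) simp_all
  ultimately show False by simp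
qed


lemma comm_DD_gen:
  assumes "\<And>s t x. s \<in> {1..p} \<Longrightarrow> t \<in> {1..p} \<Longrightarrow> R a b (A (s,t) x) = A (s,t) (R a b x)"
  shows "R a b (DD x) = DD (R a b x)"
proof -
  have bl: "R a b (opM N y) = opM N (R a b y)" if "blk N" for N y
    using that assms unfolding blk_def by (intro opM_commute_gen) (metis prod.collapse)
  have "R a b (DD x) = (\<Sum>\<sigma>\<in>Perm. sc (of_int (sign \<sigma>)) (R a b (OP (\<lambda>q. (q, \<sigma> q)) {1..p} x)))"
    unfolding DD_def by (simp add: R_sum R_sc)
  also have "\<dots> = DD (R a b x)" unfolding DD_def OP_def
    by (rule sum.cong[OF refl]) (simp add: bl[OF blk_OP])
  finally show ?thesis .
qed

lemma zero_mode: "\<exists>c. R m (- m) (U i) = sc c (U i)"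
proof -
  have pos: "\<exists>c. R (int a) (- int a) (U i) = sc c (U i)" if a1: "1 \<le> a" for a
  proof (cases "a \<le> p")
    case True
    then have "a \<in> {1..p}" using a1 by simp
    then show ?thesis using E_U[of a a i] by auto
  next
    case False
    have cm: "R (int a) (- int a) (A (s,t) x) = A (s,t) (R (int a) (- int a) x)" if "s \<in> {1..p}" "t \<in> {1..p}" for s t x
      using E_A[of s t a a x] that False by simp
    have "R (int a) (- int a) (U j) = sc (of_nat a) (U j)" for j
    proof (induct j)
      case 0 show ?case using Rw_zero[of "int a"] by (simp add: U_0)
    next
      case (Suc j)
      have "R (int a) (- int a) (DD (U j)) = DD (R (int a) (- int a) (U j))" by (rule comm_DD_gen[OF cm])
      then show ?case unfolding U_Suc using Suc by (simp add: DD_sc)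
    qed
    then show ?thesis by blast
  qed
  consider "0 < m" | "m = 0" | "m < 0" by linarith
  then show ?thesis
  proof cases
    case 1
    then show ?thesis using pos[of "nat m"] by simp
  next
    case 2
    have "nice 0 0"
    proof -
      have "R 0 0 (A (s,t) x) = A (s,t) (R 0 0 x)" if "s \<in> {1..p}" "t \<in> {1..p}" for s t x
        using that by (simp add: A_st, subst comm1, simp)
      moreover have "R 0 0 w = 0" using Rw_zero[of 0] by simp
      ultimately show ?thesis unfolding nice_def by blast
    qed
    then have "R 0 0 (U i) = 0" by (rule nice_U)
    then have "R m (- m) (U i) = sc 0 (U i)" using 2 by simp
    then show ?thesis by blast
  next
    case 3
    have h: "1 \<le> nat (- m)" using 3 by simp
    obtain c where c0: "R (int (nat (- m))) (- int (nat (- m))) (U i) = sc c (U i)" using pos[OF h] by blast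
    have e: "int (nat (- m)) = - m" using 3 by simp
    have c: "R (- m) m (U i) = sc c (U i)" using c0 unfolding e by simp
    have "R m (- m) (U i) = R (- m) m (U i) + sc (of_int m) (U i)" using symm1[of m "- m" "U i"] by simp
    also have "R (- m) m (U i) = sc c (U i)" by (rule c)
    finally show ?thesis by (metis vs.scale_left_distrib)
  qed
qed

context
  fixes \<nu> :: nat
  assumes nu: "1 \<le> \<nu>" and rr: "r = 1 - 2 * of_nat \<nu> + of_nat p"
begin

lemma diag_kill: assumes "a \<in> {1..p}" shows "R (int a) (int a) (U \<nu>) = 0"
proof -
  obtain i where i: "\<nu> = Suc i" using nu by (cases \<nu>) auto
  have "r + 2 * of_nat (Suc i) - of_nat p - 1 = 0" using rr i by simp
  then show ?thesis unfolding i XU[OF assms] by simp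
qed

lemma off_kill: assumes "a \<in> {1..p}" "b \<in> {1..p}" "a \<noteq> b" shows "R (int a) (int b) (U \<nu>) = 0"
proof -
  have "R (int a) (- int b) (R (int b) (int b) (U \<nu>)) = R (int b) (int b) (R (int a) (- int b) (U \<nu>))
     + sc (- 2 * of_nat b) (R (int a) (int b) (U \<nu>))" by (rule E_X) (use assms in auto)
  moreover have "R (int b) (int b) (U \<nu>) = 0" by (rule diag_kill[OF assms(2)])
  moreover have "R (int a) (- int b) (U \<nu>) = 0" using E_U[OF assms(1) assms(2), of \<nu>] assms(3) by simp
  ultimately have "sc (- 2 * of_nat b) (R (int a) (int b) (U \<nu>)) = 0" by simp
  then show ?thesis using assms(2) by simp
qed

lemma kill_aux: assumes "n \<le> m" "0 < m + n" shows "R m n (U \<nu>) = 0"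
proof -
  define a where "a = nat m"
  have a: "m = int a" "1 \<le> a" using assms unfolding a_def by linarith+
  show ?thesis
  proof (cases "p < a")
    case True
    have "R m n w = 0" by (rule Rw_plus) (use assms a in simp_all)
    then show ?thesis unfolding a by (rule good_U[OF good_big[OF True]])
  next
    case False
    then have ap: "a \<in> {1..p}" using a by simp
    consider "1 \<le> n" | "n = 0" | "n < 0" by linarith
    then show ?thesis
    proof cases
      case 1
      define b where "b = nat n"
      have b: "n = int b" "1 \<le> b" using 1 unfolding b_def by linarith+
      have bp: "b \<in> {1..p}" using b a ap assms by simp
      show ?thesis
      proof (cases "a = b")
        case True then show ?thesis unfolding a b using diag_kill[OF ap] by simp
      next
        case False then show ?thesis unfolding a b by (rule off_kill[OF ap bp])
      qed
    next
      case 2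
      have "R m n w = 0" by (rule Rw_plus) (use assms a 2 in simp_all)
      then show ?thesis unfolding a 2 by (rule good_U[OF good_0[OF a(2)]])
    next
      case 3
      define k where "k = nat (- n)"
      have k: "n = - int k" "1 \<le> k" using 3 unfolding k_def by linarith+
      have kp: "k \<in> {1..p}" "k \<noteq> a" using k a ap assms by auto
      show ?thesis unfolding a k using E_U[OF ap kp(1), of \<nu>] kp(2) by simp
    qed
  qed
qed

lemma kill_all: assumes "0 < m + n" shows "R m n (U \<nu>) = 0"
proof (cases "n \<le> m")
  case True then show ?thesis using kill_aux assms by blast
next
  case False
  have "R m n = R n m" by (rule symm1') (use assms in simp)
  then show ?thesis using kill_aux[of m n] False assms by simp
qed


definition NK :: "key list \<Rightarrow> bool" where
  "NK ks \<longleftrightarrow> (\<forall>k\<in>set ks. \<exists>a b. k = (1,1,a,b) \<and> a + b < 0)"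

definition Y where "Y = vs.span {opw \<rho> ks (U \<nu>) | ks. NK ks}"

lemma Y_gen: "NK ks \<Longrightarrow> opw \<rho> ks (U \<nu>) \<in> Y"
  unfolding Y_def by (rule vs.span_base) blast

lemma Y_neg: assumes "a + b < 0" "x \<in> Y" shows "R a b x \<in> Y"
  using assms(2) unfolding Y_def
proof (rule R_span[rotated])
  fix g assume "g \<in> {opw \<rho> ks (U \<nu>) | ks. NK ks}"
  then obtain ks where g: "g = opw \<rho> ks (U \<nu>)" "NK ks" by blast
  have "R a b g = opw \<rho> ((1,1,a,b) # ks) (U \<nu>)" unfolding g by (simp add: opw_cons)
  moreover have "NK ((1,1,a,b) # ks)" using g(2) assms(1) unfolding NK_def by auto
  ultimately have "R a b g \<in> Y" using Y_gen by simp
  then show "R a b g \<in> vs.span {opw \<rho> ks (U \<nu>) | ks. NK ks}" unfolding Y_def .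
qed

lemma Y_gen_stable: "NK ks \<Longrightarrow> R m n (opw \<rho> ks (U \<nu>)) \<in> Y"
proof (induct ks arbitrary: m n)
  case Nil
  consider "m + n < 0" | "m + n > 0" | "m + n = 0" by linarith
  then show ?case
  proof cases
    case 1
    have "R m n (opw \<rho> [] (U \<nu>)) = opw \<rho> [(1,1,m,n)] (U \<nu>)" by (simp add: opw_nil opw_cons)
    moreover have "NK [(1,1,m,n)]" using 1 unfolding NK_def by simp
    ultimately show ?thesis using Y_gen by simp
  next
    case 2 then show ?thesis using kill_all[of m n] by (simp add: opw_nil Y_def vs.span_zero)
  next
    case 3
    then have n: "n = - m" by simp
    obtain c where "R m (- m) (U \<nu>) = sc c (U \<nu>)" using zero_mode by blast
    moreover have "U \<nu> \<in> Y" using Y_gen[of "[]"] by (simp add: NK_def opw_nil)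
    ultimately show ?thesis unfolding n by (simp add: opw_nil Y_def vs.span_scale)
  qed
next
  case (Cons k ks)
  obtain a b where k: "k = (1,1,a,b)" "a + b < 0" using Cons(2) unfolding NK_def by auto
  have nk: "NK ks" using Cons(2) unfolding NK_def by simp
  let ?z = "opw \<rho> ks (U \<nu>)"
  have IH: "\<And>m n. R m n ?z \<in> Y" by (rule Cons(1)[OF nk])
  have z: "?z \<in> Y" by (rule Y_gen[OF nk])
  have Rr: "Rr x y ?z \<in> Y" for x y
    unfolding Rr_def' using IH[of x y] z by (simp add: Y_def vs.span_add vs.span_scale)
  have "R m n (opw \<rho> (k # ks) (U \<nu>)) = R a b (R m n ?z)
     + (sc (dlt (n + a = 0) n) (Rr m b ?z) + sc (dlt (n + b = 0) n) (Rr m a ?z)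
     + sc (dlt (m + a = 0) m) (Rr b n ?z) + sc (dlt (m + b = 0) m) (Rr a n ?z))"
    unfolding k opw_cons by (rule comm1)
  also have "\<dots> \<in> Y"
    using Y_neg[OF k(2) IH[of m n]] Rr unfolding Y_def by (simp add: vs.span_add vs.span_scale)
  finally show ?case .
qed

lemma Y_stable: "x \<in> Y \<Longrightarrow> R m n x \<in> Y"
  unfolding Y_def by (rule R_span[rotated]) (use Y_gen_stable in \<open>auto simp: Y_def\<close>)

lemma Y_sub_Hp: "Y \<subseteq> Hp"
proof -
  have full: "U i \<in> Full" for i
  proof (induct i)
    case 0
    have "opw \<rho> [] w \<in> Full" unfolding Full_def by (rule vs.span_base) (auto simp: lowl_def)
    then show ?case by (simp add: U_0 opw_nil)
  next
    case (Suc i)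
    have A_full: "A a x \<in> Full" if "x \<in> Full" for a x
      using neg_to_Hp[OF _ that] Hp_Full unfolding A_R by auto
    have opM_full: "opM M x \<in> Full" if "x \<in> Full" for M x
      using that by (induct M arbitrary: x) (simp_all add: A_full)
    have opM_Hp: "opM (add_mset a M) x \<in> Hp" if "x \<in> Full" for a M x
      using neg_to_Hp[OF _ opM_full[OF that]] unfolding opM_add_mset A_R by simp
    have "DD (U i) \<in> Hp"
      unfolding DD_def OP_def
    proof (rule vs.subspace_sum[OF vs.subspace_span[of "{opw \<rho> ks w | ks. lowl ks \<and> ks \<noteq> []}", folded Hp_def]])
      fix \<sigma> assume "\<sigma> \<in> Perm"
      have "mset_set {1..p} \<noteq> {#}" using p1 by (simp add: mset_set_empty_iff)
      then obtain a M where "image_mset (\<lambda>q. (q, \<sigma> q)) (mset_set {1..p}) = add_mset a M"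
        by (metis image_mset_is_empty_iff multiset_cases)
      then have "opM (image_mset (\<lambda>q. (q, \<sigma> q)) (mset_set {1..p})) (U i) \<in> Hp"
        using opM_Hp[OF Suc] by simp
      then show "sc (of_int (sign \<sigma>)) (opM (image_mset (\<lambda>q. (q, \<sigma> q)) (mset_set {1..p})) (U i)) \<in> Hp"
        unfolding Hp_def by (rule vs.span_scale)
    qed
    then show ?case using Hp_Full by (auto simp: U_Suc)
  qed
  obtain i where i: "\<nu> = Suc i" using nu by (cases \<nu>) auto
  have uH: "U \<nu> \<in> Hp"
  proof -
    have "DD (U i) \<in> Hp"
      unfolding DD_def OP_def
    proof (rule vs.subspace_sum[OF vs.subspace_span[of "{opw \<rho> ks w | ks. lowl ks \<and> ks \<noteq> []}", folded Hp_def]])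
      fix \<sigma> assume "\<sigma> \<in> Perm"
      have "mset_set {1..p} \<noteq> {#}" using p1 by (simp add: mset_set_empty_iff)
      then obtain a M where e: "image_mset (\<lambda>q. (q, \<sigma> q)) (mset_set {1..p}) = add_mset a M"
        by (metis image_mset_is_empty_iff multiset_cases)
      have "opM M (U i) \<in> Full"
      proof (induct M)
        case empty then show ?case using full by simp
      next
        case (add b M) then show ?case using neg_to_Hp[OF _ add] Hp_Full unfolding opM_add_mset A_R by auto
      qed
      then have "opM (add_mset a M) (U i) \<in> Hp" using neg_to_Hp unfolding opM_add_mset A_R by simp
      then show "sc (of_int (sign \<sigma>)) (opM (image_mset (\<lambda>q. (q, \<sigma> q)) (mset_set {1..p})) (U i)) \<in> Hp"
        unfolding e Hp_def by (rule vs.span_scale)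
    qed
    then show ?thesis unfolding i U_Suc .
  qed
  have gen: "opw \<rho> ks (U \<nu>) \<in> Hp" if "NK ks" for ks
    using that
  proof (induct ks)
    case Nil then show ?case using uH by (simp add: opw_nil)
  next
    case (Cons k ks)
    obtain a b where k: "k = (1,1,a,b)" "a + b < 0" using Cons(2) unfolding NK_def by auto
    have "opw \<rho> ks (U \<nu>) \<in> Hp" using Cons unfolding NK_def by simp
    then show ?case unfolding k opw_cons using neg_to_Hp[OF k(2)] Hp_Full by blast
  qed
  show ?thesis unfolding Y_def
    by (rule vs.span_minimal) (use gen in \<open>auto simp: Hp_def\<close>)
qed

lemma w_notin_Y: "w \<notin> Y" using Y_sub_Hp w_notin_Hp by blast

lemma stab_W:
  assumes W: "vs.subspace W" "w \<in> W" "stable1 \<rho> W"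
  shows "Y \<subseteq> W"
proof -
  have RW: "R a b x \<in> W" if "x \<in> W" "a + b < 0" for a b x
  proof (cases "a \<le> b")
    case True then show ?thesis using W(3) that unfolding stable1_def by blast
  next
    case False
    have "R a b = R b a" by (rule symm1') (use that in simp)
    then show ?thesis using W(3) that False unfolding stable1_def by simp
  qed
  have AW: "A a x \<in> W" if "x \<in> W" for a x unfolding A_R using RW[OF that] by simp
  have opMW: "opM M x \<in> W" if "x \<in> W" for M x using that by (induct M arbitrary: x) (simp_all add: AW)
  have DW: "DD x \<in> W" if "x \<in> W" for x
    unfolding DD_def OP_def by (rule vs.subspace_sum[OF W(1)]) (simp add: vs.subspace_scale[OF W(1)] opMW that)
  have UW: "U i \<in> W" for i by (induct i) (simp_all add: U_0 U_Suc W(2) DW)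
  have gen: "opw \<rho> ks (U \<nu>) \<in> W" if "NK ks" for ks
    using that
  proof (induct ks)
    case Nil then show ?case using UW by (simp add: opw_nil)
  next
    case (Cons k ks)
    obtain a b where k: "k = (1,1,a,b)" "a + b < 0" using Cons(2) unfolding NK_def by auto
    have "opw \<rho> ks (U \<nu>) \<in> W" using Cons unfolding NK_def by simp
    then show ?case unfolding k opw_cons using RW k(2) by blast
  qed
  show ?thesis unfolding Y_def by (rule vs.span_minimal) (use gen W(1) in auto)
qed

lemma reducible: "reducible1 sc \<rho> (Mone sc \<rho> w)"
  unfolding reducible1_def
proof (intro exI conjI)
  show "vs.subspace Y" unfolding Y_def by simp
  show "Y \<subseteq> Mone sc \<rho> w" unfolding Mone_def using stab_W by blast
  show "stable1 \<rho> Y" unfolding stable1_def using Y_stable by blast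
  have "U \<nu> \<in> Y" using Y_gen[of "[]"] by (simp add: NK_def opw_nil)
  then show "Y \<noteq> {0}" using U_nz by blast
  have "w \<in> Mone sc \<rho> w" unfolding Mone_def by blast
  then show "Y \<noteq> Mone sc \<rho> w" using w_notin_Y by blast
qed

end

end

theorem proposition6p1:
  fixes d :: nat and r :: int and \<nu> p :: nat
    and sc :: "complex \<Rightarrow> 'v::ab_group_add \<Rightarrow> 'v"
    and \<rho> :: "key \<Rightarrow> 'v \<Rightarrow> 'v" and w :: 'v
  assumes "d \<ge> 2" and "\<nu> \<ge> 1" and "p \<ge> 1"
    and "r = 1 - 2 * int \<nu> + int p"
    and "Mr_model d (of_int r) sc \<rho> w"
  shows "(\<forall>m n. m + n > 0 \<longrightarrow> \<rho> (1,1,m,n) ((detV sc \<rho> p ^^ \<nu>) w) = 0)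
         \<and> reducible1 sc \<rho> (Mone sc \<rho> w)"
proof -
  interpret LMP d "of_int r" sc \<rho> w p
    by unfold_locales (use assms in auto)
  have rr: "(of_int r :: complex) = 1 - 2 * of_nat \<nu> + of_nat p" using assms(4) by simp
  have D: "detV sc \<rho> p = DD" by (rule ext) (rule detV_eq)
  have u: "(detV sc \<rho> p ^^ \<nu>) w = U \<nu>" unfolding D U_def ..
  show ?thesis unfolding u using kill_all[OF assms(2) rr] reducible[OF assms(2) rr] by blast
qed

end
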